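(* Let $X$ be a real Banach space, $I=\{1,\ldots,m\}$, $J=\{1,\ldots,l\}$, $f_0,f_i,g_j\colon X\to\mathbb{R}$, and let $\overline{x}$ be a locally optimal solution of $$\min f_0(x)\quad\text{s.t.}\quad f_i(x)=0\ \forall i\in I,\quad g_j(x)\le0\ \forall j\in J.$$ Let $J(\overline{x})=\{j\in J\mid g_j(\overline{x})=0\}$ and suppose: (i) $f_0$ is quasidifferentiable and Hadamard directionally differentiable at $\overline{x}$; (ii) the functions $f_i$, $i\in I$, are continuous in a neighbourhood of $\overline{x}$ and quasidifferentiable at $\overline{x}$ uniformly along finite dimensional spaces; (iii) the functions $g_j$, $j\notin J(\overline{x})$, are upper semicontinuous and quasidifferentiable at $\overline{x}$, while $g_j$, $j\in J(\overline{x})$, are quasidifferentiable at $\overline{x}$ uniformly along finite dimensional spaces; (iv) vectors $x_i^*\in\underline{\partial} f_i(\overline{x})$, $y_i^*\in\overline{\partial} f_i(\overline{x})$, $i\in I$, and $z_j^*\in\overline{\partial} g_j(\overline{x})$, $j\in J(\overline{x})$, satisfy: (1) for any $i\in I$ there exists $v_i\in X$ with $s(\underline{\partial} f_i(\overline{x})+y_i^*,v_i)<0$ and, for all $k\ne i$, $s(\underline{\partial} f_k(\overline{x})+y_k^*,v_i)\le0$, $s(-x_k^*-\overline{\partial} f_k(\overline{x}),v_i)\le0$; (2) for any $i\in I$ there exists $w_i\in X$ with $s(-x_i^*-\overline{\partial} f_i(\overline{x}),w_i)<0$ and, for all $k\ne i$, $s(-x_k^*-\overline{\partial} f_k(\overline{x}),w_i)\le0$,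 $s(\underline{\partial} f_k(\overline{x})+y_k^*,w_i)\le0$; (3) there exists $v_0\in X$ with $s(\underline{\partial} g_j(\overline{x})+z_j^*,v_0)<0$ for all $j\in J(\overline{x})$ and $s(\underline{\partial} f_i(\overline{x})+y_i^*,v_0)\le0$, $s(-x_i^*-\overline{\partial} f_i(\overline{x}),v_0)\le0$ for all $i\in I$. Then for any $y_0^*\in\overline{\partial} f_0(\overline{x})$ and any $z_j^*\in\overline{\partial} g_j(\overline{x})$, $j\notin J(\overline{x})$, there exist $\lambda_j\ge0$, $j\in J$, such that $\lambda_jg_j(\overline{x})=0$ for all $j\in J$ and $$0\in\underline{\partial} f_0(\overline{x})+y_0^*+\sum_{j=1}^l\lambda_j\big(\underline{\partial} g_j(\overline{x})+z_j^*\big)+\operatorname{cl}^*\operatorname{cone}\{C_i\mid i\in I\},$$ where $C_i=(\underline{\partial} f_i(\overline{x})+y_i^* )\cup(-x_i^*-\overline{\partial} f_i(\overline{x}))$.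
   Context: $X^*$ is the dual with pairing $\langle\cdot,\cdot\rangle$; $\operatorname{cl}^*$ is weak$^*$ closure. $f$ is d.d. at $x$ if $f'(x,v)=\lim_{\alpha\to+0}(f(x+\alpha v)-f(x))/\alpha$ exists finitely for all $v$; Hadamard d.d. if $\lim_{[\alpha,v']\to[+0,v]}(f(x+\alpha v')-f(x))/\alpha$ exists finitely for all $v$; d.d. uniformly along finite dimensional spaces if for any $v$, finite dimensional subspace $X_0$ and $\varepsilon>0$ there is $\delta>0$ with $|(f(x+\alpha v')-f(x))/\alpha-f'(x,v)|<\varepsilon$ whenever $0<\alpha<\delta$, $v'\in v+X_0$, $\|v'-v\|<\delta$. $f$ is quasidifferentiable at $x$ if d.d. and there is a pair $[\underline{\partial} f(x),\overline{\partial} f(x)]$ of convex weak$^*$ compact subsets of $X^*$ with $f'(x,v)=\max_{x^*\in\underline{\partial} f(x)}\langle x^*,v\rangle+\min_{y^*\in\overline{\partial} f(x)}\langle y^*,v\rangle$ for all $v$ (uniformly along finite dimensional spaces if also d.d. in that uniform sense); a specific quasidifferential is fixed for each function. $s(C,v)=\sup_{x^*\in C}\langle x^*,v\rangle$. $\operatorname{cone}$ of a family of sets is the set of finite nonnegative linear combinations of elements of their union. Sums are Minkowski sums. *)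

theory Defs
  imports "HOL-Analysis.Analysis"
begin

text \<open>The dual space X* is modelled as the bounded linear functionals X \<Rightarrow>L real;
  the pairing is blinfun_apply.\<close>

definition weak_star :: "('a::real_normed_vector \<Rightarrow>\<^sub>L real) topology" where
  "weak_star = pullback_topology UNIV blinfun_apply (product_topology (\<lambda>_. euclideanreal) UNIV)"

definition wstar_closure :: "('a::real_normed_vector \<Rightarrow>\<^sub>L real) set \<Rightarrow> ('a \<Rightarrow>\<^sub>L real) set" where
  "wstar_closure S = weak_star closure_of S"

definition cone_fam :: "'b::real_vector set set \<Rightarrow> 'b set" where
  "cone_fam \<C> = {y. \<exists>F c. finite F \<and> F \<subseteq> \<Union>\<C> \<and> (\<forall>u\<in>F. c u \<ge> (0::real)) \<and> y = (\<Sum>u\<in>F. c u *\<^sub>R u)}"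

definition supp :: "('a::real_normed_vector \<Rightarrow>\<^sub>L real) set \<Rightarrow> 'a \<Rightarrow> real" where
  "supp C v = Sup ((\<lambda>x. blinfun_apply x v) ` C)"

definition dir_diff :: "('a::real_normed_vector \<Rightarrow> real) \<Rightarrow> 'a \<Rightarrow> bool" where
  "dir_diff f x \<longleftrightarrow> (\<forall>v. \<exists>L. ((\<lambda>t. (f (x + t *\<^sub>R v) - f x) / t) \<longlongrightarrow> L) (at_right 0))"

definition dir_deriv :: "('a::real_normed_vector \<Rightarrow> real) \<Rightarrow> 'a \<Rightarrow> 'a \<Rightarrow> real" where
  "dir_deriv f x v = Lim (at_right 0) (\<lambda>t. (f (x + t *\<^sub>R v) - f x) / t)"

definition hadamard_dir_diff :: "('a::real_normed_vector \<Rightarrow> real) \<Rightarrow> 'a \<Rightarrow> bool" where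
  "hadamard_dir_diff f x \<longleftrightarrow> (\<forall>v. \<exists>L.
     ((\<lambda>(t, w). (f (x + t *\<^sub>R w) - f x) / t) \<longlongrightarrow> L) (at (0, v) within ({0<..} \<times> UNIV)))"

text \<open>d.d. uniformly along finite dimensional spaces; finite dimensional subspaces are
  exactly the spans of finite sets.\<close>
definition unif_dir_diff :: "('a::real_normed_vector \<Rightarrow> real) \<Rightarrow> 'a \<Rightarrow> bool" where
  "unif_dir_diff f x \<longleftrightarrow> dir_diff f x \<and>
     (\<forall>v B \<epsilon>. finite B \<and> \<epsilon> > 0 \<longrightarrow> (\<exists>\<delta>>0. \<forall>t w. 0 < t \<and> t < \<delta> \<and> w - v \<in> span B \<and> norm (w - v) < \<delta>
        \<longrightarrow> \<bar>(f (x + t *\<^sub>R w) - f x) / t - dir_deriv f x v\<bar> < \<epsilon>))"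

definition quasidiff :: "('a::real_normed_vector \<Rightarrow> real) \<Rightarrow> 'a \<Rightarrow> ('a \<Rightarrow>\<^sub>L real) set \<Rightarrow> ('a \<Rightarrow>\<^sub>L real) set \<Rightarrow> bool" where
  "quasidiff f x L U \<longleftrightarrow> dir_diff f x \<and> convex L \<and> convex U \<and> L \<noteq> {} \<and> U \<noteq> {} \<and>
     compactin weak_star L \<and> compactin weak_star U \<and>
     (\<forall>v. dir_deriv f x v = Sup ((\<lambda>a. blinfun_apply a v) ` L) + Inf ((\<lambda>b. blinfun_apply b v) ` U))"

definition unif_quasidiff :: "('a::real_normed_vector \<Rightarrow> real) \<Rightarrow> 'a \<Rightarrow> ('a \<Rightarrow>\<^sub>L real) set \<Rightarrow> ('a \<Rightarrow>\<^sub>L real) set \<Rightarrow> bool" where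
  "unif_quasidiff f x L U \<longleftrightarrow> quasidiff f x L U \<and> unif_dir_diff f x"

definition usc_at :: "('a::topological_space \<Rightarrow> real) \<Rightarrow> 'a \<Rightarrow> bool" where
  "usc_at f x \<longleftrightarrow> (\<forall>e>0. eventually (\<lambda>y. f y < f x + e) (at x))"

definition loc_opt :: "('a::real_normed_vector \<Rightarrow> real) \<Rightarrow> (nat \<Rightarrow> 'a \<Rightarrow> real) \<Rightarrow> nat \<Rightarrow> (nat \<Rightarrow> 'a \<Rightarrow> real) \<Rightarrow> nat \<Rightarrow> 'a \<Rightarrow> bool" where
  "loc_opt f0 f m g l xb \<longleftrightarrow>
     (\<forall>i\<in>{1..m}. f i xb = 0) \<and> (\<forall>j\<in>{1..l}. g j xb \<le> 0) \<and>
     (\<exists>r>0. \<forall>x. dist x xb < r \<and> (\<forall>i\<in>{1..m}. f i x = 0) \<and> (\<forall>j\<in>{1..l}. g j x \<le> 0) \<longrightarrow> f0 xb \<le> f0 x)"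

end

theory Submission
  imports Defs "HOL-Homology.Brouwer_Degree"
begin

lemma nsphere_eq_tos:
  "nsphere n = top_of_set {x. (\<Sum>i<Suc n. x i ^ 2) = 1 \<and> (\<forall>i\<ge>Suc n. x i = (0::real))}"
  unfolding nsphere euclidean_product_topology
  by (metis (no_types, lifting) Suc_le_eq lessThan_Suc_atMost)

definition nrm :: "nat \<Rightarrow> (nat \<Rightarrow> real) \<Rightarrow> real" where
  "nrm m y = (\<Sum>i<m. (y i)^2)"

definition nz :: "nat \<Rightarrow> (nat \<Rightarrow> real) \<Rightarrow> (nat \<Rightarrow> real)" where
  "nz m y = (\<lambda>i. y i / sqrt (nrm m y))"

lemma continuous_on_nrm: assumes "continuous_on S g" shows "continuous_on S (\<lambda>z. nrm m (g z))"
  unfolding nrm_def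
  by (intro continuous_on_sum continuous_on_power continuous_on_product_then_coordinatewise[OF assms])

lemma continuous_on_nz:
  assumes "continuous_on S g" "\<And>z. z \<in> S \<Longrightarrow> nrm m (g z) > 0"
  shows "continuous_on S (\<lambda>z. nz m (g z))"
  unfolding nz_def
proof (intro continuous_on_coordinatewise_then_product continuous_on_divide)
  fix i show "continuous_on S (\<lambda>z. g z i)"
    using assms(1) by (rule continuous_on_product_then_coordinatewise)
  show "continuous_on S (\<lambda>z. sqrt (nrm m (g z)))"
    by (intro continuous_intros continuous_on_nrm assms(1))
  show "\<forall>z\<in>S. sqrt (nrm m (g z)) \<noteq> 0" using assms(2) by force
qed

lemma nrm_pos_if_inner:
  assumes "(\<Sum>i<m. x i * y i) > (0::real)"
  shows "nrm m y > 0"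
proof (rule ccontr)
  assume "\<not> nrm m y > 0"
  moreover have "nrm m y \<ge> 0" unfolding nrm_def by (simp add: sum_nonneg)
  ultimately have "nrm m y = 0" by linarith
  then have "\<forall>i\<in>{..<m}. (y i)^2 = 0" unfolding nrm_def
    by (simp add: sum_nonneg_eq_0_iff)
  then have "(\<Sum>i<m. x i * y i) = 0" by simp
  with assms show False by simp
qed

lemma nz_sphere:
  assumes "nrm m y > 0" "\<forall>i\<ge>m. y i = 0"
  shows "nrm m (nz m y) = 1" "\<forall>i\<ge>m. nz m y i = 0"
proof -
  have "nrm m (nz m y) = (\<Sum>i<m. (y i)^2 / nrm m y)"
    unfolding nz_def nrm_def[of m "\<lambda>i. y i / sqrt (nrm m y)"] using assms(1)
    by (simp add: power_divide less_imp_le)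
  also have "\<dots> = nrm m y / nrm m y"
    by (simp only: nrm_def sum_divide_distrib)
  finally show "nrm m (nz m y) = 1" using assms(1) by simp
  show "\<forall>i\<ge>m. nz m y i = 0" using assms(2) by (simp add: nz_def)
qed

lemma zero_lemma:
  fixes F :: "(nat \<Rightarrow> real) \<Rightarrow> nat \<Rightarrow> real" and m :: nat
  assumes cont: "continuous_on {s. nrm m s \<le> 1 \<and> (\<forall>i\<ge>m. s i = 0)} F"
    and bd: "\<And>s. nrm m s = 1 \<Longrightarrow> (\<forall>i\<ge>m. s i = 0) \<Longrightarrow> (\<Sum>i<m. s i * F s i) > 0"
  shows "\<exists>s. nrm m s \<le> 1 \<and> (\<forall>i\<ge>m. s i = 0) \<and> (\<forall>i<m. F s i = 0)"
proof (rule ccontr)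
  assume nex: "\<not> ?thesis"
  define Bl where "Bl = {s. nrm m s \<le> 1 \<and> (\<forall>i\<ge>m. s i = 0)}"
  define Sph where "Sph = {s. nrm m s = 1 \<and> (\<forall>i\<ge>m. s i = 0)}"
  have SB: "Sph \<subseteq> Bl" unfolding Sph_def Bl_def by auto
  have m0: "m \<noteq> 0"
  proof
    assume m0: "m = 0"
    from nex have "\<not> (nrm m (\<lambda>_. 0) \<le> 1 \<and> (\<forall>i\<ge>m. (\<lambda>_. 0::real) i = 0) \<and> (\<forall>i<m. F (\<lambda>_. 0) i = 0))"
      by blast
    then show False using m0 by (simp add: nrm_def)
  qed
  then obtain n where mn: "m = Suc n" by (cases m) auto
  define G where "G s = (\<lambda>i. if i < m then F s i else 0)" for s
  have Gpos: "nrm m (G s) > 0" if "s \<in> Bl" for s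
  proof -
    have "\<exists>i<m. F s i \<noteq> 0" using nex that unfolding Bl_def by blast
    then obtain i where i: "i < m" "F s i \<noteq> 0" by blast
    have "0 < (G s i)^2" using i by (simp add: G_def)
    also have "\<dots> \<le> nrm m (G s)" unfolding nrm_def
      by (rule member_le_sum) (use i in auto)
    finally show ?thesis .
  qed
  have Gz: "\<forall>i\<ge>m. G s i = 0" for s by (simp add: G_def)
  have contG: "continuous_on Bl G"
    unfolding G_def
  proof (intro continuous_on_coordinatewise_then_product)
    fix i
    show "continuous_on Bl (\<lambda>x. if i < m then F x i else 0)"
      using continuous_on_product_then_coordinatewise[OF cont[folded Bl_def], of i]
      by (cases "i < m") auto
  qed
  have nzx: "nz m x = x" if "x \<in> Sph" for x
    using that by (simp add: Sph_def nz_def)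
  define H1 where "H1 = (\<lambda>(t::real, x). nz m (\<lambda>i. (1 - t) * x i + t * G x i))"
  define H2 where "H2 = (\<lambda>(t::real, x). nz m (G (\<lambda>i. (1 - t) * x i)))"
  have pos1: "nrm m (\<lambda>i. (1 - t) * x i + t * G x i) > 0" if "t \<in> {0..1}" "x \<in> Sph" for t x
  proof (rule nrm_pos_if_inner[where x = x])
    have "(\<Sum>i<m. x i * ((1 - t) * x i + t * G x i)) = (\<Sum>i<m. (1 - t) * (x i)^2 + t * (x i * F x i))"
      by (rule sum.cong) (auto simp: G_def algebra_simps power2_eq_square)
    also have "\<dots> = (1 - t) * nrm m x + t * (\<Sum>i<m. x i * F x i)"
      by (simp add: nrm_def sum.distrib sum_distrib_left)
    also have "\<dots> = (1 - t) + t * (\<Sum>i<m. x i * F x i)" using that by (simp add: Sph_def)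
    also have "\<dots> > 0"
    proof -
      have "(\<Sum>i<m. x i * F x i) > 0" using bd that by (auto simp: Sph_def)
      then show ?thesis using that
        by (cases "t = 0") (auto intro: add_nonneg_pos add_pos_nonneg)
    qed
    finally show "(\<Sum>i<m. x i * ((1 - t) * x i + t * G x i)) > 0" .
  qed
  have inB: "(\<lambda>i. (1 - t) * x i) \<in> Bl" if "t \<in> {0..1}" "x \<in> Sph" for t x
  proof -
    have "nrm m (\<lambda>i. (1 - t) * x i) = (1 - t)^2 * nrm m x"
      by (simp add: nrm_def power_mult_distrib sum_distrib_left)
    also have "\<dots> = (1 - t)^2" using that by (simp add: Sph_def)
    also have "\<dots> \<le> 1" using that by (simp add: power_le_one)
    finally show ?thesis using that by (simp add: Bl_def Sph_def)
  qed
  have hom1: "homotopic_with (\<lambda>x. True) (top_of_set Sph) (top_of_set Sph) id (\<lambda>x. nz m (G x))"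
  proof (subst homotopic_with, simp, intro exI conjI)
    show "continuous_map (prod_topology (top_of_set {0..1}) (top_of_set Sph)) (top_of_set Sph) H1"
      unfolding prod_topology_subtopology_eu continuous_map_subtopology_eu
    proof
      have csnd: "continuous_on ({0..1} \<times> Sph) (\<lambda>p. snd p i)" for i
        by (rule continuous_on_product_then_coordinatewise[OF continuous_on_snd[OF continuous_on_id]])
      have cG: "continuous_on ({0..1} \<times> Sph) (\<lambda>p. G (snd p))"
        by (rule continuous_on_compose2[OF contG continuous_on_snd[OF continuous_on_id]]) (use SB in auto)
      have c: "continuous_on ({0..1} \<times> Sph) (\<lambda>p. (\<lambda>i. (1 - fst p) * snd p i + fst p * G (snd p) i))"
      proof (rule continuous_on_coordinatewise_then_product)
        fix i
        show "continuous_on ({0..1} \<times> Sph) (\<lambda>p. (1 - fst p) * snd p i + fst p * G (snd p) i)"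
          by (intro continuous_on_add continuous_on_mult continuous_on_diff continuous_on_const
              continuous_on_fst[OF continuous_on_id] csnd continuous_on_product_then_coordinatewise[OF cG])
      qed
      have "continuous_on ({0..1} \<times> Sph) (\<lambda>p. nz m (\<lambda>i. (1 - fst p) * snd p i + fst p * G (snd p) i))"
        by (rule continuous_on_nz[OF c]) (use pos1 in auto)
      then show "continuous_on ({0..1} \<times> Sph) H1"
        by (simp add: H1_def case_prod_beta')
      show "H1 \<in> {0..1} \<times> Sph \<rightarrow> Sph"
      proof
        fix p :: "real \<times> (nat \<Rightarrow> real)" assume p: "p \<in> {0..1} \<times> Sph"
        then obtain t x where pe: "p = (t,x)" and t: "t\<in>{0..1}" and x: "x\<in>Sph" by auto
        let ?y = "\<lambda>i. (1-t) * x i + t * G x i"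
        have "nrm m ?y > 0" using pos1 t x .
        moreover have "\<forall>i\<ge>m. ?y i = 0" using x by (simp add: Sph_def G_def)
        ultimately show "H1 p \<in> Sph" using nz_sphere[of m ?y] by (simp add: H1_def Sph_def pe)
      qed
    qed
    show "\<forall>x\<in>topspace (top_of_set Sph). H1 (0, x) = id x"
      using nzx by (simp add: H1_def)
    show "\<forall>x\<in>topspace (top_of_set Sph). H1 (1, x) = nz m (G x)"
      by (simp add: H1_def)
  qed simp
  have hom2: "homotopic_with (\<lambda>x. True) (top_of_set Sph) (top_of_set Sph) (\<lambda>x. nz m (G x)) (\<lambda>x. nz m (G (\<lambda>i. 0)))"
  proof (subst homotopic_with, simp, intro exI conjI)
    show "continuous_map (prod_topology (top_of_set {0..1}) (top_of_set Sph)) (top_of_set Sph) H2"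
      unfolding prod_topology_subtopology_eu continuous_map_subtopology_eu
    proof
      have c0: "continuous_on ({0..1} \<times> Sph) (\<lambda>p. (\<lambda>i. (1 - fst p) * snd p i))"
      proof (rule continuous_on_coordinatewise_then_product)
        fix i
        show "continuous_on ({0..1} \<times> Sph) (\<lambda>p. (1 - fst p) * snd p i)"
          by (intro continuous_on_mult continuous_on_diff continuous_on_const
              continuous_on_fst[OF continuous_on_id]
              continuous_on_product_then_coordinatewise[OF continuous_on_snd[OF continuous_on_id]])
      qed
      have c: "continuous_on ({0..1} \<times> Sph) (\<lambda>p. G (\<lambda>i. (1 - fst p) * snd p i))"
        by (rule continuous_on_compose2[OF contG c0]) (use inB in auto)
      have "continuous_on ({0..1} \<times> Sph) (\<lambda>p. nz m (G (\<lambda>i. (1 - fst p) * snd p i)))"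
        by (rule continuous_on_nz[OF c]) (use Gpos inB in auto)
      then show "continuous_on ({0..1} \<times> Sph) H2"
        by (simp add: H2_def case_prod_beta')
      show "H2 \<in> {0..1} \<times> Sph \<rightarrow> Sph"
      proof
        fix p :: "real \<times> (nat \<Rightarrow> real)" assume p: "p \<in> {0..1} \<times> Sph"
        then obtain t x where pe: "p = (t,x)" and t: "t\<in>{0..1}" and x: "x\<in>Sph" by auto
        let ?y = "G (\<lambda>i. (1-t) * x i)"
        have "nrm m ?y > 0" using Gpos inB t x by blast
        moreover have "\<forall>i\<ge>m. ?y i = 0" by (simp add: G_def)
        ultimately show "H2 p \<in> Sph" using nz_sphere[of m ?y] by (simp add: H2_def Sph_def pe)
      qed
    qed
    show "\<forall>x\<in>topspace (top_of_set Sph). H2 (0, x) = nz m (G x)"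
      by (simp add: H2_def)
    show "\<forall>x\<in>topspace (top_of_set Sph). H2 (1, x) = nz m (G (\<lambda>i. 0))"
      by (simp add: H2_def)
  qed simp
  have cs: "contractible_space (top_of_set Sph)"
    unfolding contractible_space_def using homotopic_with_trans[OF hom1 hom2] by blast
  have eq: "nsphere n = top_of_set Sph"
    unfolding nsphere_eq_tos Sph_def nrm_def mn by (rule refl)
  have "contractible_space (nsphere n)" unfolding eq by (rule cs)
  then show False using non_contractible_space_nsphere[of n] by (rule notE[rotated])
qed

definition wnb :: "'a::real_normed_vector set \<Rightarrow> real \<Rightarrow> ('a \<Rightarrow>\<^sub>L real) \<Rightarrow> ('a \<Rightarrow>\<^sub>L real) set" where
  "wnb V e x = {y. \<forall>v\<in>V. \<bar>blinfun_apply y v - blinfun_apply x v\<bar> < e}"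

lemma ws_top [simp]: "topspace (weak_star :: ('a::real_normed_vector \<Rightarrow>\<^sub>L real) topology) = UNIV"
  unfolding weak_star_def by (simp add: topspace_pullback_topology)

lemma ws_eval: "continuous_map weak_star euclideanreal (\<lambda>a::'a::real_normed_vector \<Rightarrow>\<^sub>L real. blinfun_apply a v)"
proof -
  have "continuous_map weak_star euclideanreal ((\<lambda>f. f v) \<circ> (blinfun_apply :: ('a \<Rightarrow>\<^sub>L real) \<Rightarrow> _))"
    unfolding weak_star_def
    by (rule continuous_map_pullback[OF continuous_map_product_projection]) simp
  then show ?thesis by (simp add: o_def)
qed

lemma wnb_open:
  fixes x :: "'a::real_normed_vector \<Rightarrow>\<^sub>L real"
  assumes "finite V"
  shows "openin weak_star (wnb V e x)"
proof -
  have "open {f::'a \<Rightarrow> real. \<forall>v\<in>V. f (id v) \<in> ball (blinfun_apply x v) e}"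
    by (rule product_topology_basis') (use assms in auto)
  then have o: "openin (product_topology (\<lambda>_. euclideanreal) UNIV) {f::'a \<Rightarrow> real. \<forall>v\<in>V. f v \<in> ball (blinfun_apply x v) e}"
    by (simp add: euclidean_product_topology)
  have eq: "wnb V e x = blinfun_apply -` {f::'a \<Rightarrow> real. \<forall>v\<in>V. f v \<in> ball (blinfun_apply x v) e} \<inter> UNIV"
    by (auto simp: wnb_def dist_real_def abs_minus_commute)
  show ?thesis
    unfolding weak_star_def openin_pullback_topology eq using o by blast
qed

lemma wnb_center: "e > 0 \<Longrightarrow> x \<in> wnb V e x"
  by (simp add: wnb_def)

lemma ws_open_nb:
  fixes x :: "'a::real_normed_vector \<Rightarrow>\<^sub>L real"
  assumes "openin weak_star U" "x \<in> U"
  shows "\<exists>V e. finite V \<and> e > 0 \<and> wnb V e x \<subseteq> U"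
proof -
  obtain W where W: "openin (product_topology (\<lambda>_. euclideanreal) UNIV) W" "U = blinfun_apply -` W \<inter> UNIV"
    using assms(1) unfolding weak_star_def openin_pullback_topology by blast
  then have "blinfun_apply x \<in> W" using assms(2) by auto
  then obtain X where X: "blinfun_apply x \<in> (\<Pi>\<^sub>E i\<in>UNIV. X i)" "\<forall>i. openin euclideanreal (X i)"
      "finite {i. X i \<noteq> topspace euclideanreal}" "(\<Pi>\<^sub>E i\<in>UNIV. X i) \<subseteq> W"
    using product_topology_open_contains_basis[OF W(1)] by blast
  define V where "V = {i. X i \<noteq> UNIV}"
  have fV: "finite V" using X(3) by (simp add: V_def)
  have "\<forall>i\<in>V. \<exists>e>0. ball (blinfun_apply x i) e \<subseteq> X i"
  proof
    fix i assume "i \<in> V"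
    have "open (X i)" using X(2) by simp
    moreover have "blinfun_apply x i \<in> X i" using X(1) by auto
    ultimately show "\<exists>e>0. ball (blinfun_apply x i) e \<subseteq> X i"
      by (simp add: open_contains_ball)
  qed
  then obtain ee where ee: "\<And>i. i \<in> V \<Longrightarrow> ee i > 0 \<and> ball (blinfun_apply x i) (ee i) \<subseteq> X i"
    by metis
  define e where "e = Min (insert 1 (ee ` V))"
  have epos: "e > 0" unfolding e_def using fV ee by (auto simp: Min_gr_iff)
  have ele: "e \<le> ee i" if "i \<in> V" for i
    unfolding e_def using fV that by (auto intro: Min_le)
  have "wnb V e x \<subseteq> U"
  proof
    fix y assume y: "y \<in> wnb V e x"
    have "blinfun_apply y i \<in> X i" for i
    proof (cases "i \<in> V")
      case True
      then have "\<bar>blinfun_apply y i - blinfun_apply x i\<bar> < ee i" using y ele[OF True] by (auto simp: wnb_def)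
      then show ?thesis using ee[OF True] by (auto simp: dist_real_def abs_minus_commute)
    next
      case False then show ?thesis by (simp add: V_def)
    qed
    then have "blinfun_apply y \<in> (\<Pi>\<^sub>E i\<in>UNIV. X i)" by auto
    then show "y \<in> U" using X(4) W(2) by auto
  qed
  then show ?thesis using fV epos by blast
qed

lemma ws_closure_iff:
  fixes x :: "'a::real_normed_vector \<Rightarrow>\<^sub>L real"
  shows "x \<in> wstar_closure S \<longleftrightarrow> (\<forall>(V::'a set) e. finite V \<longrightarrow> e > 0 \<longrightarrow> (\<exists>s\<in>S. s \<in> wnb V e x))"
proof
  assume x: "x \<in> wstar_closure S"
  show "\<forall>(V::'a set) e. finite V \<longrightarrow> e > 0 \<longrightarrow> (\<exists>s\<in>S. s \<in> wnb V e x)"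
  proof (intro allI impI)
    fix V :: "'a set" and e :: real assume "finite V" "e > 0"
    then show "\<exists>s\<in>S. s \<in> wnb V e x"
      using x wnb_open[of V e x] wnb_center[of e x V] unfolding wstar_closure_def in_closure_of by blast
  qed
next
  assume R: "\<forall>(V::'a set) e. finite V \<longrightarrow> e > 0 \<longrightarrow> (\<exists>s\<in>S. s \<in> wnb V e x)"
  show "x \<in> wstar_closure S"
    unfolding wstar_closure_def in_closure_of
  proof (intro conjI allI impI)
    show "x \<in> topspace weak_star" by simp
    fix T assume "x \<in> T \<and> openin weak_star T"
    then obtain V e where "finite V" "e > 0" "wnb V e x \<subseteq> T" using ws_open_nb by metis
    then show "\<exists>y. y \<in> S \<and> y \<in> T" using R by blast
  qed
qed

lemma ws_subset_closure: "S \<subseteq> wstar_closure S"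
  unfolding wstar_closure_def by (rule closure_of_subset) simp

lemma ws_compact_bounded:
  fixes K :: "('a::real_normed_vector \<Rightarrow>\<^sub>L real) set"
  assumes "compactin weak_star K"
  shows "bounded ((\<lambda>a. blinfun_apply a v) ` K)"
proof -
  have "compactin euclideanreal ((\<lambda>a. blinfun_apply a v) ` K)"
    by (rule image_compactin[OF assms ws_eval])
  then show ?thesis by (simp add: compact_imp_bounded)
qed

lemma ws_closure_add:
  fixes K :: "('a::real_normed_vector \<Rightarrow>\<^sub>L real) set"
  assumes K: "\<And>a b. a \<in> K \<Longrightarrow> b \<in> K \<Longrightarrow> a + b \<in> K"
    and a: "a \<in> wstar_closure K" and b: "b \<in> wstar_closure K"
  shows "a + b \<in> wstar_closure K"
  unfolding ws_closure_iff
proof (intro allI impI)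
  fix V :: "'a set" and e :: real assume V: "finite V" "e > 0"
  obtain a' where a': "a' \<in> K" "a' \<in> wnb V (e/2) a" using a V unfolding ws_closure_iff by (meson half_gt_zero)
  obtain b' where b': "b' \<in> K" "b' \<in> wnb V (e/2) b" using b V unfolding ws_closure_iff by (meson half_gt_zero)
  have "a' + b' \<in> wnb V e (a + b)"
  proof -
    have "\<bar>blinfun_apply (a' + b') v - blinfun_apply (a + b) v\<bar> < e" if "v \<in> V" for v
    proof -
      have "\<bar>blinfun_apply a' v - blinfun_apply a v\<bar> < e/2" "\<bar>blinfun_apply b' v - blinfun_apply b v\<bar> < e/2"
        using a'(2) b'(2) that by (auto simp: wnb_def)
      then show ?thesis by (simp add: blinfun.add_left) (smt (verit))
    qed
    then show ?thesis by (simp add: wnb_def)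
  qed
  then show "\<exists>s\<in>K. s \<in> wnb V e (a + b)" using K a'(1) b'(1) by blast
qed

lemma ws_closure_scale:
  fixes K :: "('a::real_normed_vector \<Rightarrow>\<^sub>L real) set"
  assumes K0: "0 \<in> K" and K: "\<And>c a. c \<ge> 0 \<Longrightarrow> a \<in> K \<Longrightarrow> c *\<^sub>R a \<in> K"
    and a: "a \<in> wstar_closure K" and c: "c \<ge> 0"
  shows "c *\<^sub>R a \<in> wstar_closure K"
proof (cases "c = 0")
  case True then show ?thesis using K0 ws_subset_closure by auto
next
  case False
  then have cp: "c > 0" using c by simp
  show ?thesis
    unfolding ws_closure_iff
  proof (intro allI impI)
    fix V :: "'a set" and e :: real assume V: "finite V" "e > 0"
    obtain a' where a': "a' \<in> K" "a' \<in> wnb V (e/c) a" using a V cp unfolding ws_closure_iff by (meson divide_pos_pos)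
    have "c *\<^sub>R a' \<in> wnb V e (c *\<^sub>R a)"
    proof -
      have "\<bar>blinfun_apply (c *\<^sub>R a') v - blinfun_apply (c *\<^sub>R a) v\<bar> < e" if "v \<in> V" for v
      proof -
        have "\<bar>blinfun_apply a' v - blinfun_apply a v\<bar> < e/c" using a'(2) that by (auto simp: wnb_def)
        then have "c * \<bar>blinfun_apply a' v - blinfun_apply a v\<bar> < e" using cp by (simp add: field_simps)
        then show ?thesis using cp by (simp add: blinfun.scaleR_left right_diff_distrib[symmetric] abs_mult)
      qed
      then show ?thesis by (simp add: wnb_def)
    qed
    then show "\<exists>s\<in>K. s \<in> wnb V e (c *\<^sub>R a)" using K c a'(1) by blast
  qed
qed

lemma ws_closure_halfspace:
  fixes K :: "('a::real_normed_vector \<Rightarrow>\<^sub>L real) set"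
  assumes K: "\<And>k. k \<in> K \<Longrightarrow> blinfun_apply k v0 \<le> 0" and a: "a \<in> wstar_closure K"
  shows "blinfun_apply a v0 \<le> 0"
proof (rule ccontr)
  assume "\<not> ?thesis"
  then have p: "blinfun_apply a v0 > 0" by simp
  obtain s where "s \<in> K" "s \<in> wnb {v0} (blinfun_apply a v0) a"
    using a p unfolding ws_closure_iff by (meson finite.emptyI finite_insert)
  then show False using K[of s] by (auto simp: wnb_def)
qed

lemma ws_cover:
  fixes E K :: "('a::real_normed_vector \<Rightarrow>\<^sub>L real) set"
  assumes E: "compactin weak_star E"
    and nz: "\<And>e a. e \<in> E \<Longrightarrow> a \<in> wstar_closure K \<Longrightarrow> e + a \<noteq> 0"
  shows "\<exists>V \<epsilon>. finite V \<and> \<epsilon> > 0 \<and> (\<forall>e\<in>E. \<forall>a\<in>wstar_closure K. \<exists>v\<in>V. \<epsilon> \<le> \<bar>blinfun_apply (e + a) v\<bar>)"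
proof -
  have "\<forall>e\<in>E. \<exists>V \<epsilon>. finite V \<and> \<epsilon> > 0 \<and> (\<forall>s\<in>K. s \<notin> wnb V \<epsilon> (-e))"
  proof
    fix e assume "e \<in> E"
    then have "-e \<notin> wstar_closure K" using nz[of e "-e"] by auto
    then show "\<exists>V \<epsilon>. finite V \<and> \<epsilon> > 0 \<and> (\<forall>s\<in>K. s \<notin> wnb V \<epsilon> (-e))"
      unfolding ws_closure_iff by blast
  qed
  then obtain VV ee where VV: "\<And>e. e \<in> E \<Longrightarrow> finite (VV e) \<and> ee e > 0 \<and> (\<forall>s\<in>K. s \<notin> wnb (VV e) (ee e) (-e))"
    by metis
  have key: "\<exists>v\<in>VV e. ee e / 2 \<le> \<bar>blinfun_apply a v + blinfun_apply e v\<bar>"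
    if e: "e \<in> E" and a: "a \<in> wstar_closure K" for e a
  proof (rule ccontr)
    assume "\<not> ?thesis"
    then have lt: "\<forall>v\<in>VV e. \<bar>blinfun_apply a v + blinfun_apply e v\<bar> < ee e / 2" by force
    obtain s where s: "s \<in> K" "s \<in> wnb (VV e) (ee e / 2) a"
      using a VV[OF e] unfolding ws_closure_iff by (meson half_gt_zero)
    have "s \<in> wnb (VV e) (ee e) (-e)"
    proof -
      have "\<bar>blinfun_apply s v - blinfun_apply (-e) v\<bar> < ee e" if "v \<in> VV e" for v
      proof -
        have "\<bar>blinfun_apply s v - blinfun_apply a v\<bar> < ee e / 2" using s(2) that by (auto simp: wnb_def)
        moreover have "\<bar>blinfun_apply a v + blinfun_apply e v\<bar> < ee e / 2" using lt that by blast
        ultimately show ?thesis by (simp add: blinfun.minus_left) (smt (verit))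
      qed
      then show ?thesis by (simp add: wnb_def)
    qed
    then show False using VV[OF e] s(1) by blast
  qed
  define Oe where "Oe e = wnb (VV e) (ee e / 4) e" for e
  have "\<exists>F. finite F \<and> F \<subseteq> Oe ` E \<and> E \<subseteq> \<Union>F"
  proof -
    have "\<forall>U\<in>Oe ` E. openin weak_star U" unfolding Oe_def using VV by (metis (no_types, lifting) imageE wnb_open)
    moreover have "E \<subseteq> \<Union>(Oe ` E)" using VV by (force simp: Oe_def wnb_def)
    ultimately show ?thesis using E unfolding compactin_def by blast
  qed
  then obtain F where F: "finite F" "F \<subseteq> Oe ` E" "E \<subseteq> \<Union>F" by blast
  then obtain E' where E': "E' \<subseteq> E" "finite E'" "F = Oe ` E'" by (meson finite_subset_image)
  define V where "V = \<Union>(VV ` E')"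
  define \<epsilon> where "\<epsilon> = Min (insert 1 ((\<lambda>e. ee e / 4) ` E'))"
  have fV: "finite V" using E' VV by (auto simp: V_def)
  have ep: "\<epsilon> > 0" using E' VV by (auto simp: \<epsilon>_def Min_gr_iff)
  have ele: "\<epsilon> \<le> ee e / 4" if "e \<in> E'" for e
    unfolding \<epsilon>_def by (rule Min_le) (use E' that in auto)
  have "\<forall>b\<in>E. \<forall>a\<in>wstar_closure K. \<exists>v\<in>V. \<epsilon> \<le> \<bar>blinfun_apply (b + a) v\<bar>"
  proof (intro ballI)
    fix b a assume b: "b \<in> E" and a: "a \<in> wstar_closure K"
    then obtain e where e: "e \<in> E'" "b \<in> Oe e" using F E' by auto
    then have eE: "e \<in> E" using E' by auto
    obtain v where v: "v \<in> VV e" "ee e / 2 \<le> \<bar>blinfun_apply a v + blinfun_apply e v\<bar>" using key[OF eE a] by blast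
    have "\<bar>blinfun_apply b v - blinfun_apply e v\<bar> < ee e / 4" using e(2) v(1) by (auto simp: Oe_def wnb_def)
    then have "ee e / 4 \<le> \<bar>blinfun_apply (b + a) v\<bar>" using v(2) by (simp add: blinfun.add_left) (smt (verit))
    moreover have "v \<in> V" using v(1) e(1) by (auto simp: V_def)
    ultimately show "\<exists>v\<in>V. \<epsilon> \<le> \<bar>blinfun_apply (b + a) v\<bar>" using ele[OF e(1)] by force
  qed
  then show ?thesis using fV ep by blast
qed

definition bddE :: "('a::real_normed_vector \<Rightarrow>\<^sub>L real) set \<Rightarrow> bool" where
  "bddE C \<longleftrightarrow> (\<forall>v. bounded ((\<lambda>a. blinfun_apply a v) ` C))"

lemma supp_upper: "bddE C \<Longrightarrow> a \<in> C \<Longrightarrow> blinfun_apply a v \<le> supp C v"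
  unfolding supp_def by (rule cSup_upper) (auto simp: bddE_def intro: bounded_imp_bdd_above)

lemma supp_least: "C \<noteq> {} \<Longrightarrow> (\<And>a. a \<in> C \<Longrightarrow> blinfun_apply a v \<le> c) \<Longrightarrow> supp C v \<le> c"
  unfolding supp_def by (rule cSup_least) auto

lemma bddE_trans: assumes "bddE L" shows "bddE ((\<lambda>a. a + y) ` L)"
  unfolding bddE_def
proof
  fix v
  obtain B where B: "\<forall>t\<in>(\<lambda>a. blinfun_apply a v) ` L. norm t \<le> B" using assms unfolding bddE_def bounded_iff by blast
  have "\<forall>t\<in>(\<lambda>a. blinfun_apply a v) ` (\<lambda>a. a + y) ` L. norm t \<le> B + \<bar>blinfun_apply y v\<bar>"
    using B by (auto simp: blinfun.add_left intro!: order.trans[OF abs_triangle_ineq])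
  then show "bounded ((\<lambda>a. blinfun_apply a v) ` (\<lambda>a. a + y) ` L)" unfolding bounded_iff by blast
qed

lemma bddE_neg: assumes "bddE U" shows "bddE ((\<lambda>b. - x - b) ` U)"
  unfolding bddE_def
proof
  fix v
  obtain B where B: "\<forall>t\<in>(\<lambda>a. blinfun_apply a v) ` U. norm t \<le> B" using assms unfolding bddE_def bounded_iff by blast
  have "\<forall>t\<in>(\<lambda>a. blinfun_apply a v) ` (\<lambda>b. - x - b) ` U. norm t \<le> B + \<bar>blinfun_apply x v\<bar>"
    using B by (auto simp: blinfun.diff_left blinfun.minus_left)
  then show "bounded ((\<lambda>a. blinfun_apply a v) ` (\<lambda>b. - x - b) ` U)" unfolding bounded_iff by blast
qed

lemma qd_upper:
  assumes L: "L \<noteq> {}" "bddE L" and U: "bddE U" and y: "y \<in> U"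
    and eq: "D = Sup ((\<lambda>a. blinfun_apply a d) ` L) + Inf ((\<lambda>b. blinfun_apply b d) ` U)"
  shows "D \<le> supp ((\<lambda>a. a + y) ` L) d"
proof -
  have "Inf ((\<lambda>b. blinfun_apply b d) ` U) \<le> blinfun_apply y d"
    by (rule cInf_lower) (use y U in \<open>auto simp: bddE_def intro: bounded_imp_bdd_below\<close>)
  moreover have "Sup ((\<lambda>a. blinfun_apply a d) ` L) \<le> supp ((\<lambda>a. a + y) ` L) d - blinfun_apply y d"
  proof (rule cSup_least)
    show "(\<lambda>a. blinfun_apply a d) ` L \<noteq> {}" using L by simp
    fix t assume "t \<in> (\<lambda>a. blinfun_apply a d) ` L"
    then obtain a where a: "a \<in> L" "t = blinfun_apply a d" by blast
    have "blinfun_apply (a + y) d \<le> supp ((\<lambda>a. a + y) ` L) d"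
      by (rule supp_upper[OF bddE_trans[OF L(2)]]) (use a in auto)
    then show "t \<le> supp ((\<lambda>a. a + y) ` L) d - blinfun_apply y d" using a by (simp add: blinfun.add_left)
  qed
  ultimately show ?thesis using eq by linarith
qed

lemma qd_lower:
  assumes L: "bddE L" and U: "U \<noteq> {}" "bddE U" and x: "x \<in> L"
    and eq: "D = Sup ((\<lambda>a. blinfun_apply a d) ` L) + Inf ((\<lambda>b. blinfun_apply b d) ` U)"
  shows "- supp ((\<lambda>b. - x - b) ` U) d \<le> D"
proof -
  have "blinfun_apply x d \<le> Sup ((\<lambda>a. blinfun_apply a d) ` L)"
    by (rule cSup_upper) (use x L in \<open>auto simp: bddE_def intro: bounded_imp_bdd_above\<close>)
  moreover have "- blinfun_apply x d - supp ((\<lambda>b. - x - b) ` U) d \<le> Inf ((\<lambda>b. blinfun_apply b d) ` U)"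
  proof (rule cInf_greatest)
    show "(\<lambda>a. blinfun_apply a d) ` U \<noteq> {}" using U by simp
    fix t assume "t \<in> (\<lambda>a. blinfun_apply a d) ` U"
    then obtain b where b: "b \<in> U" "t = blinfun_apply b d" by blast
    have "blinfun_apply (- x - b) d \<le> supp ((\<lambda>b. - x - b) ` U) d"
      by (rule supp_upper[OF bddE_neg[OF U(2)]]) (use b in auto)
    then show "- blinfun_apply x d - supp ((\<lambda>b. - x - b) ` U) d \<le> t" using b
      by (simp add: blinfun.diff_left blinfun.minus_left)
  qed
  ultimately show ?thesis using eq by linarith
qed

lemma finsep:
  fixes Y :: "('b \<Rightarrow> real) set" and V :: "'b set"
  assumes fV: "finite V" and ep: "\<epsilon> > 0"
   and conv: "\<And>y x u. y \<in> Y \<Longrightarrow> x \<in> Y \<Longrightarrow> 0 \<le> u \<Longrightarrow> u \<le> 1 \<Longrightarrow> (\<lambda>v. (1-u) * y v + u * x v) \<in> Y"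
   and far: "\<And>y. y \<in> Y \<Longrightarrow> \<exists>v\<in>V. \<epsilon> \<le> \<bar>y v\<bar>"
  shows "\<exists>c. \<forall>x\<in>Y. \<epsilon>^2 \<le> (\<Sum>v\<in>V. c v * x v)"
proof (cases "Y = {}")
  case True then show ?thesis by simp
next
  case False
  define Q where "Q y = (\<Sum>v\<in>V. (y v)^2)" for y :: "'b \<Rightarrow> real"
  have Qge: "\<epsilon>^2 \<le> Q y" if yY: "y \<in> Y" for y
  proof -
    obtain v where v: "v \<in> V" "\<epsilon> \<le> \<bar>y v\<bar>" using far[OF yY] by blast
    have "\<epsilon>^2 \<le> \<bar>y v\<bar>^2" using v ep by (intro power_mono) auto
    also have "\<dots> = (y v)^2" by simp
    also have "\<dots> \<le> Q y" unfolding Q_def by (rule member_le_sum) (use v fV in auto)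
    finally show ?thesis .
  qed
  define d where "d = Inf (Q ` Y)"
  have bddQ: "bdd_below (Q ` Y)" using Qge by (auto intro!: bdd_belowI[where m = "\<epsilon>^2"])
  have dge: "\<epsilon>^2 \<le> d" unfolding d_def by (rule cInf_greatest) (use False Qge in auto)
  have dle: "d \<le> Q y" if "y \<in> Y" for y unfolding d_def by (rule cInf_lower) (use that bddQ in auto)
  have "\<forall>n. \<exists>y\<in>Y. Q y < d + inverse (real (Suc n))"
  proof
    fix n
    have "Inf (Q ` Y) < d + inverse (real (Suc n))" unfolding d_def by simp
    then obtain t where "t \<in> Q ` Y" "t < d + inverse (real (Suc n))"
      using cInf_lessD[of "Q ` Y"] False by blast
    then show "\<exists>y\<in>Y. Q y < d + inverse (real (Suc n))" by blast
  qed
  then obtain yy where yy: "\<And>n. yy n \<in> Y" "\<And>n. Q (yy n) < d + inverse (real (Suc n))" by metis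
  have bdd: "bounded ((\<lambda>x. x k) ` range yy)" if kV: "k \<in> V" for k
  proof -
    have "\<bar>yy n k\<bar> \<le> d + 2" for n
    proof -
      have "(yy n k)^2 \<le> Q (yy n)" unfolding Q_def by (rule member_le_sum) (use kV fV in auto)
      moreover have "inverse (real (Suc n)) \<le> 1" by (simp add: field_simps)
      moreover have "\<bar>yy n k\<bar> \<le> 1 + (yy n k)^2"
      proof (cases "\<bar>yy n k\<bar> \<le> 1")
        case True then show ?thesis using zero_le_power2[of "yy n k"] by linarith
      next
        case False
        then have "\<bar>yy n k\<bar> * 1 \<le> \<bar>yy n k\<bar> * \<bar>yy n k\<bar>" by (intro mult_left_mono) auto
        then show ?thesis by (simp add: power2_eq_square abs_mult_self_eq)
      qed
      ultimately show ?thesis using yy(2)[of n] by linarith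
    qed
    then show ?thesis unfolding bounded_iff by auto
  qed
  have "\<exists>l r. strict_mono r \<and> (\<forall>e>0. eventually (\<lambda>n. \<forall>i\<in>V. dist (yy (r n) i) (l i) < e) sequentially)"
    using compact_lemma_general[where proj = "\<lambda>x k. x k" and unproj = "\<lambda>e. e" and f = yy and basis = V, OF fV bdd]
    by blast
  then obtain l r where r: "strict_mono r"
    and lim: "\<forall>e>0. eventually (\<lambda>n. \<forall>i\<in>V. dist (yy (r n) i) (l i) < e) sequentially"
    by blast
  have limi: "(\<lambda>n. yy (r n) i) \<longlonglongrightarrow> l i" if iV: "i \<in> V" for i
    unfolding tendsto_iff
  proof (intro allI impI)
    fix e :: real assume "e > 0"
    then have "eventually (\<lambda>n. \<forall>i\<in>V. dist (yy (r n) i) (l i) < e) sequentially" using lim by blast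
    then show "eventually (\<lambda>n. dist (yy (r n) i) (l i) < e) sequentially"
      by eventually_elim (use iV in blast)
  qed
  have limS: "(\<lambda>n. Q (yy (r n))) \<longlonglongrightarrow> d"
  proof (rule tendsto_sandwich[where f = "\<lambda>n. d" and h = "\<lambda>n. d + inverse (real (Suc n))"])
    show "\<forall>\<^sub>F n in sequentially. d \<le> Q (yy (r n))" using dle yy by auto
    have "Q (yy (r n)) \<le> d + inverse (real (Suc n))" for n
    proof -
      have "n \<le> r n" using r by (rule seq_suble)
      then have "inverse (real (Suc (r n))) \<le> inverse (real (Suc n))" by (simp add: le_imp_inverse_le)
      then show ?thesis using yy(2)[of "r n"] by linarith
    qed
    then show "\<forall>\<^sub>F n in sequentially. Q (yy (r n)) \<le> d + inverse (real (Suc n))" by simp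
    show "(\<lambda>n. d) \<longlonglongrightarrow> d" by simp
    show "(\<lambda>n. d + inverse (real (Suc n))) \<longlonglongrightarrow> d"
      using tendsto_add[OF tendsto_const LIMSEQ_inverse_real_of_nat, of d] by simp
  qed
  have main: "d \<le> (\<Sum>v\<in>V. l v * x v)" if x: "x \<in> Y" for x
  proof (rule ccontr)
    assume nt: "\<not> ?thesis"
    define P where "P = (\<Sum>v\<in>V. l v * x v)"
    define X where "X = Q x"
    have Pd: "P < d" using nt by (simp add: P_def)
    have limP: "(\<lambda>n. \<Sum>v\<in>V. yy (r n) v * x v) \<longlonglongrightarrow> P"
      unfolding P_def by (intro tendsto_sum tendsto_mult_right limi)
    have ineq: "d \<le> (1-u)^2 * d + 2*u*(1-u) * P + u^2 * X" if u: "0 \<le> u" "u \<le> 1" for u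
    proof -
      have expand: "Q (\<lambda>v. (1-u) * yy n v + u * x v) = (1-u)^2 * Q (yy n) + 2*u*(1-u) * (\<Sum>v\<in>V. yy n v * x v) + u^2 * X" for n
      proof -
        have "Q (\<lambda>v. (1-u) * yy n v + u * x v) = (\<Sum>v\<in>V. (1-u)^2 * (yy n v)^2 + 2*u*(1-u) * (yy n v * x v) + u^2 * (x v)^2)"
          unfolding Q_def by (rule sum.cong) (auto simp: power2_eq_square algebra_simps)
        also have "\<dots> = (1-u)^2 * Q (yy n) + 2*u*(1-u) * (\<Sum>v\<in>V. yy n v * x v) + u^2 * X"
          by (simp add: Q_def X_def sum.distrib sum_distrib_left)
        finally show ?thesis .
      qed
      have "((\<lambda>n. Q (\<lambda>v. (1-u) * yy (r n) v + u * x v)) \<longlonglongrightarrow> (1-u)^2 * d + 2*u*(1-u) * P + u^2 * X)"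
        unfolding expand
        by (intro tendsto_add[OF tendsto_add[OF tendsto_mult_left[OF limS] tendsto_mult_left[OF limP]] tendsto_const])
      moreover have "\<forall>\<^sub>F n in sequentially. d \<le> Q (\<lambda>v. (1-u) * yy (r n) v + u * x v)"
        using dle conv[OF yy(1) x u] by auto
      ultimately show ?thesis by (rule tendsto_lowerbound) simp
    qed
    define \<delta> where "\<delta> = d - P"
    define Mx where "Mx = \<bar>d - 2*P + X\<bar> + 1"
    define u where "u = min (1/2) (\<delta> / Mx)"
    have dp: "\<delta> > 0" using Pd by (simp add: \<delta>_def)
    have Mp: "Mx > 0" by (simp add: Mx_def add_nonneg_pos)
    have up: "u > 0" using dp Mp by (simp add: u_def)
    have u1: "u \<le> 1" by (simp add: u_def)
    have "d \<le> (1-u)^2 * d + 2*u*(1-u) * P + u^2 * X" using ineq up u1 by simp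
    moreover have "(1-u)^2 * d + 2*u*(1-u) * P + u^2 * X - d = u * (-2*\<delta> + u * (d - 2*P + X))"
      by (simp add: \<delta>_def power2_eq_square algebra_simps)
    ultimately have "0 \<le> u * (-2*\<delta> + u * (d - 2*P + X))" by linarith
    then have A: "2*\<delta> \<le> u * (d - 2*P + X)" using up by (simp add: zero_le_mult_iff)
    have "u * (d - 2*P + X) \<le> u * \<bar>d - 2*P + X\<bar>" using up by (intro mult_left_mono) auto
    also have "\<dots> \<le> (\<delta> / Mx) * \<bar>d - 2*P + X\<bar>" by (intro mult_right_mono) (auto simp: u_def)
    also have "\<dots> \<le> (\<delta> / Mx) * Mx" using dp Mp by (intro mult_left_mono) (auto simp: Mx_def)
    also have "\<dots> = \<delta>" using Mp by simp
    finally show False using A dp by linarith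
  qed
  show ?thesis using main dge by (intro exI[of _ l]) (auto intro: order.trans)
qed

lemma dd_tendsto:
  assumes "dir_diff f x"
  shows "((\<lambda>t. (f (x + t *\<^sub>R v) - f x) / t) \<longlongrightarrow> dir_deriv f x v) (at_right 0)"
proof -
  obtain L where L: "((\<lambda>t. (f (x + t *\<^sub>R v) - f x) / t) \<longlongrightarrow> L) (at_right 0)"
    using assms unfolding dir_diff_def by blast
  have "dir_deriv f x v = L" unfolding dir_deriv_def
    by (rule tendsto_Lim[OF _ L]) simp
  then show ?thesis using L by simp
qed

lemma unif_compact:
  fixes f :: "'a::real_normed_vector \<Rightarrow> real"
  assumes ud: "unif_dir_diff f x" and D: "compact D" and B: "finite B"
    and DB: "\<And>d. d \<in> D \<Longrightarrow> d - u \<in> span B" and th: "\<theta> > 0"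
  shows "eventually (\<lambda>t. \<forall>d\<in>D. \<bar>(f (x + t *\<^sub>R d) - f x) / t - dir_deriv f x d\<bar> < \<theta>) (at_right 0)"
proof -
  have dd: "dir_diff f x" using ud by (simp add: unif_dir_diff_def)
  have U: "\<forall>v B \<epsilon>. finite B \<and> \<epsilon> > 0 \<longrightarrow> (\<exists>\<delta>>0. \<forall>t w. 0 < t \<and> t < \<delta> \<and> w - v \<in> span B \<and> norm (w - v) < \<delta>
        \<longrightarrow> \<bar>(f (x + t *\<^sub>R w) - f x) / t - dir_deriv f x v\<bar> < \<epsilon>)"
    using ud unfolding unif_dir_diff_def by blast
  have "\<forall>d0. \<exists>\<delta>>0. \<forall>t w. 0 < t \<and> t < \<delta> \<and> w - d0 \<in> span B \<and> norm (w - d0) < \<delta>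
        \<longrightarrow> \<bar>(f (x + t *\<^sub>R w) - f x) / t - dir_deriv f x d0\<bar> < \<theta>/2"
  proof
    fix d0
    have "finite B \<and> \<theta>/2 > 0" using B th by simp
    then show "\<exists>\<delta>>0. \<forall>t w. 0 < t \<and> t < \<delta> \<and> w - d0 \<in> span B \<and> norm (w - d0) < \<delta>
        \<longrightarrow> \<bar>(f (x + t *\<^sub>R w) - f x) / t - dir_deriv f x d0\<bar> < \<theta>/2"
      using U by blast
  qed
  then obtain \<delta>f where \<delta>f: "\<And>d0. \<delta>f d0 > 0"
    "\<And>d0 t w. 0 < t \<Longrightarrow> t < \<delta>f d0 \<Longrightarrow> w - d0 \<in> span B \<Longrightarrow> norm (w - d0) < \<delta>f d0
        \<Longrightarrow> \<bar>(f (x + t *\<^sub>R w) - f x) / t - dir_deriv f x d0\<bar> < \<theta>/2"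
    by metis
  have cov: "D \<subseteq> (\<Union>c\<in>D. ball c (\<delta>f c))" using \<delta>f(1) by force
  obtain D' where D': "D' \<subseteq> D" "finite D'" "D \<subseteq> (\<Union>c\<in>D'. ball c (\<delta>f c))"
    using compactE_image[OF D _ cov] by blast
  define \<tau> where "\<tau> = Min (insert 1 (\<delta>f ` D'))"
  have tp: "\<tau> > 0" using D' \<delta>f(1) by (auto simp: \<tau>_def Min_gr_iff)
  have tle: "\<tau> \<le> \<delta>f c" if "c \<in> D'" for c unfolding \<tau>_def by (rule Min_le) (use D' that in auto)
  have P: "\<bar>(f (x + t *\<^sub>R d) - f x) / t - dir_deriv f x d\<bar> < \<theta>" if t: "0 < t" "t < \<tau>" and d: "d \<in> D" for t d
  proof -
    obtain c where c: "c \<in> D'" "d \<in> ball c (\<delta>f c)" using D'(3) d by blast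
    have cD: "c \<in> D" using c D' by auto
    have dc: "s - c \<in> span B" if "s \<in> D" for s
    proof -
      have "(s - u) - (c - u) \<in> span B" using DB[OF that] DB[OF cD] by (rule span_diff)
      then show ?thesis by simp
    qed
    have nd: "norm (d - c) < \<delta>f c" using c(2) by (simp add: dist_norm norm_minus_commute)
    have A: "\<bar>(f (x + s *\<^sub>R d) - f x) / s - dir_deriv f x c\<bar> < \<theta>/2" if "0 < s" "s < \<tau>" for s
      using \<delta>f(2)[OF that(1) _ dc[OF d] nd] that tle[OF c(1)] by linarith
    have lim: "((\<lambda>s. \<bar>(f (x + s *\<^sub>R d) - f x) / s - dir_deriv f x c\<bar>) \<longlongrightarrow> \<bar>dir_deriv f x d - dir_deriv f x c\<bar>) (at_right 0)"
      by (intro tendsto_rabs tendsto_diff dd_tendsto[OF dd] tendsto_const)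
    have ev: "eventually (\<lambda>s. \<bar>(f (x + s *\<^sub>R d) - f x) / s - dir_deriv f x c\<bar> \<le> \<theta>/2) (at_right 0)"
    proof -
      have "eventually (\<lambda>s. s \<in> {0<..<\<tau>}) (at_right (0::real))" using tp by (rule eventually_at_right_real)
      then show ?thesis by eventually_elim (use A in \<open>auto intro: less_imp_le\<close>)
    qed
    have "\<bar>dir_deriv f x d - dir_deriv f x c\<bar> \<le> \<theta>/2"
      by (rule tendsto_upperbound[OF lim ev]) simp
    then show ?thesis using A[OF t] by linarith
  qed
  have "eventually (\<lambda>t. t \<in> {0<..<\<tau>}) (at_right (0::real))" using tp by (rule eventually_at_right_real)
  then show ?thesis by eventually_elim (use P in auto)
qed

lemma supp_dir_bound:
  fixes C :: "('a::real_normed_vector \<Rightarrow>\<^sub>L real) set"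
  assumes C: "C \<noteq> {}" "bddE C" and K: "finite K" and e: "e \<ge> 0"
    and pq: "\<And>k. k \<in> K \<Longrightarrow> p k \<ge> 0 \<and> q k \<ge> 0"
  shows "supp C (u + e *\<^sub>R (\<Sum>k\<in>K. p k *\<^sub>R w k + q k *\<^sub>R v k))
     \<le> supp C u + e * (\<Sum>k\<in>K. p k * supp C (w k) + q k * supp C (v k))"
proof (rule supp_least[OF C(1)])
  fix a assume a: "a \<in> C"
  have "blinfun_apply a (u + e *\<^sub>R (\<Sum>k\<in>K. p k *\<^sub>R w k + q k *\<^sub>R v k))
      = blinfun_apply a u + e * (\<Sum>k\<in>K. p k * blinfun_apply a (w k) + q k * blinfun_apply a (v k))"
    by (simp add: blinfun.add_right blinfun.scaleR_right blinfun.sum_right)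
  also have "\<dots> \<le> supp C u + e * (\<Sum>k\<in>K. p k * supp C (w k) + q k * supp C (v k))"
  proof -
    have "(\<Sum>k\<in>K. p k * blinfun_apply a (w k) + q k * blinfun_apply a (v k)) \<le> (\<Sum>k\<in>K. p k * supp C (w k) + q k * supp C (v k))"
    proof (rule sum_mono)
      fix k assume k: "k \<in> K"
      show "p k * blinfun_apply a (w k) + q k * blinfun_apply a (v k) \<le> p k * supp C (w k) + q k * supp C (v k)"
        using pq[OF k] by (intro add_mono mult_left_mono supp_upper[OF C(2) a]) auto
    qed
    then have "e * (\<Sum>k\<in>K. p k * blinfun_apply a (w k) + q k * blinfun_apply a (v k)) \<le> e * (\<Sum>k\<in>K. p k * supp C (w k) + q k * supp C (v k))"
      using e by (rule mult_left_mono)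
    moreover have "blinfun_apply a u \<le> supp C u" by (rule supp_upper[OF C(2) a])
    ultimately show ?thesis by linarith
  qed
  finally show "blinfun_apply a (u + e *\<^sub>R (\<Sum>k\<in>K. p k *\<^sub>R w k + q k *\<^sub>R v k))
     \<le> supp C u + e * (\<Sum>k\<in>K. p k * supp C (w k) + q k * supp C (v k))" .
qed

lemma sum_le_single:
  fixes T :: "'b \<Rightarrow> real"
  assumes "finite K" "k \<in> K" "\<And>k'. k' \<in> K - {k} \<Longrightarrow> T k' \<le> 0"
  shows "sum T K \<le> T k"
proof -
  have "sum T K = T k + sum T (K - {k})" using assms(1,2) by (rule sum.remove)
  moreover have "sum T (K - {k}) \<le> 0" using assms(3) by (rule sum_nonpos)
  ultimately show ?thesis by linarith
qed

lemma frac_le_abs: "0 \<le> p \<Longrightarrow> p \<le> 1 \<Longrightarrow> p * (a::real) \<le> \<bar>a\<bar>"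
proof -
  assume p: "0 \<le> p" "p \<le> 1"
  have "p * a \<le> p * \<bar>a\<bar>" using p by (intro mult_left_mono) auto
  also have "\<dots> \<le> 1 * \<bar>a\<bar>" using p by (intro mult_right_mono) auto
  finally show ?thesis by simp
qed

lemma Bl_compact: "compact {s :: nat \<Rightarrow> real. nrm m s \<le> 1 \<and> (\<forall>i\<ge>m. s i = 0)}"
proof -
  define Box where "Box = PiE UNIV (\<lambda>k::nat. if k < m then {-1..1::real} else {0})"
  have "compactin (product_topology (\<lambda>_. euclideanreal) UNIV) Box"
    unfolding Box_def compactin_PiE by auto
  then have cB: "compact Box" by (simp add: euclidean_product_topology)
  have cl: "closed {s :: nat \<Rightarrow> real. nrm m s \<le> 1 \<and> (\<forall>i\<ge>m. s i = 0)}"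
  proof -
    have c1: "closed {s :: nat \<Rightarrow> real. nrm m s \<le> 1}"
      by (rule closed_Collect_le) (auto intro: continuous_on_nrm[OF continuous_on_id] continuous_on_const)
    have c2: "closed (\<Inter>i\<in>{m..}. {s :: nat \<Rightarrow> real. s i = 0})"
      by (intro closed_INT ballI closed_Collect_eq continuous_on_product_coordinates continuous_on_const)
    have "{s :: nat \<Rightarrow> real. nrm m s \<le> 1 \<and> (\<forall>i\<ge>m. s i = 0)} = {s. nrm m s \<le> 1} \<inter> (\<Inter>i\<in>{m..}. {s :: nat \<Rightarrow> real. s i = 0})"
      by auto
    then show ?thesis using c1 c2 by (simp add: closed_Int)
  qed
  have sub: "{s :: nat \<Rightarrow> real. nrm m s \<le> 1 \<and> (\<forall>i\<ge>m. s i = 0)} \<subseteq> Box"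
  proof
    fix s :: "nat \<Rightarrow> real" assume s: "s \<in> {s. nrm m s \<le> 1 \<and> (\<forall>i\<ge>m. s i = 0)}"
    have "\<bar>s k\<bar> \<le> 1" if "k < m" for k
    proof -
      have "(s k)^2 \<le> nrm m s" unfolding nrm_def by (rule member_le_sum) (use that in auto)
      then show ?thesis using s by (simp add: abs_square_le_1[symmetric])
    qed
    then show "s \<in> Box" using s by (auto simp: Box_def PiE_def extensional_def abs_le_iff)
  qed
  have "{s :: nat \<Rightarrow> real. nrm m s \<le> 1 \<and> (\<forall>i\<ge>m. s i = 0)} = Box \<inter> {s :: nat \<Rightarrow> real. nrm m s \<le> 1 \<and> (\<forall>i\<ge>m. s i = 0)}"
    using sub by blast
  then show ?thesis using compact_Int_closed[OF cB cl] by simp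
qed

lemma feas:
  fixes f g :: "nat \<Rightarrow> 'a::real_normed_vector \<Rightarrow> real" and xb u :: 'a
    and Cp Cm Pg :: "nat \<Rightarrow> ('a \<Rightarrow>\<^sub>L real) set" and vv ww :: "nat \<Rightarrow> 'a" and Jx :: "nat set"
    and m l :: nat and \<eta> :: real
  assumes Jx: "Jx \<subseteq> {1..l}"
   and fcont: "\<And>i. i \<in> {1..m} \<Longrightarrow> \<exists>S. open S \<and> xb \<in> S \<and> continuous_on S (f i)"
   and fud: "\<And>i. i \<in> {1..m} \<Longrightarrow> unif_dir_diff (f i) xb"
   and f0: "\<And>i. i \<in> {1..m} \<Longrightarrow> f i xb = 0"
   and Cne: "\<And>i. i \<in> {1..m} \<Longrightarrow> Cp i \<noteq> {} \<and> Cm i \<noteq> {} \<and> bddE (Cp i) \<and> bddE (Cm i)"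
   and fup: "\<And>i d. i \<in> {1..m} \<Longrightarrow> dir_deriv (f i) xb d \<le> supp (Cp i) d"
   and flo: "\<And>i d. i \<in> {1..m} \<Longrightarrow> - supp (Cm i) d \<le> dir_deriv (f i) xb d"
   and vv: "\<And>i. i \<in> {1..m} \<Longrightarrow> supp (Cp i) (vv i) < 0 \<and> (\<forall>k\<in>{1..m} - {i}. supp (Cp k) (vv i) \<le> 0 \<and> supp (Cm k) (vv i) \<le> 0)"
   and ww: "\<And>i. i \<in> {1..m} \<Longrightarrow> supp (Cm i) (ww i) < 0 \<and> (\<forall>k\<in>{1..m} - {i}. supp (Cm k) (ww i) \<le> 0 \<and> supp (Cp k) (ww i) \<le> 0)"
   and uC: "\<And>i. i \<in> {1..m} \<Longrightarrow> supp (Cp i) u \<le> 0 \<and> supp (Cm i) u \<le> 0"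
   and gud: "\<And>j. j \<in> Jx \<Longrightarrow> unif_dir_diff (g j) xb"
   and g0: "\<And>j. j \<in> Jx \<Longrightarrow> g j xb = 0"
   and Pne: "\<And>j. j \<in> Jx \<Longrightarrow> Pg j \<noteq> {} \<and> bddE (Pg j)"
   and gup: "\<And>j d. j \<in> Jx \<Longrightarrow> dir_deriv (g j) xb d \<le> supp (Pg j) d"
   and gu: "\<And>j. j \<in> Jx \<Longrightarrow> supp (Pg j) u < 0"
   and ginact: "\<And>j. j \<in> {1..l} - Jx \<Longrightarrow> usc_at (g j) xb \<and> g j xb < 0"
   and eta: "\<eta> > 0"
  shows "\<exists>t w. 0 < t \<and> t < \<eta> \<and> norm (w - u) < \<eta> \<and> (\<forall>i\<in>{1..m}. f i (xb + t *\<^sub>R w) = 0)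
           \<and> (\<forall>j\<in>{1..l}. g j (xb + t *\<^sub>R w) \<le> 0)"
proof -
  have fJ: "finite Jx" using Jx finite_subset by blast
  have Sk: "Suc k \<in> {1..m} \<longleftrightarrow> k < m" for k by auto
  define MW where "MW = (\<Sum>k<m. norm (ww (Suc k)) + norm (vv (Suc k)))"
  define Mg where "Mg j = (\<Sum>k<m. \<bar>supp (Pg j) (ww (Suc k))\<bar> + \<bar>supp (Pg j) (vv (Suc k))\<bar>)" for j
  define MG where "MG = (\<Sum>j\<in>Jx. Mg j)"
  define \<gamma> where "\<gamma> = Min (insert 1 ((\<lambda>j. - supp (Pg j) u) ` Jx))"
  define \<kappa> where "\<kappa> = Min (insert 1 ((\<lambda>k. - supp (Cp (Suc k)) (vv (Suc k))) ` {..<m} \<union> (\<lambda>k. - supp (Cm (Suc k)) (ww (Suc k))) ` {..<m}))"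
  define \<epsilon> where "\<epsilon> = min 1 (min (\<eta> / (2 * (MW + 1))) (\<gamma> / (2 * (MG + 1))))"
  define d where "d s = u + \<epsilon> *\<^sub>R (\<Sum>k<m. max (s k) 0 *\<^sub>R ww (Suc k) + max (- s k) 0 *\<^sub>R vv (Suc k))" for s :: "nat \<Rightarrow> real"
  define Bl where "Bl = {s :: nat \<Rightarrow> real. nrm m s \<le> 1 \<and> (\<forall>i\<ge>m. s i = 0)}"
  define BB where "BB = ww ` {1..m} \<union> vv ` {1..m}"
  have MWnn: "MW \<ge> 0" unfolding MW_def by (intro sum_nonneg) auto
  have Mgnn: "Mg j \<ge> 0" for j unfolding Mg_def by (intro sum_nonneg) auto
  have MGnn: "MG \<ge> 0" unfolding MG_def using Mgnn by (intro sum_nonneg) auto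
  have Mgle: "Mg j \<le> MG" if "j \<in> Jx" for j
    unfolding MG_def by (rule member_le_sum) (use that fJ Mgnn in auto)
  have \<gamma>p: "\<gamma> > 0" unfolding \<gamma>_def using fJ gu by (auto simp: Min_gr_iff)
  have \<gamma>le: "\<gamma> \<le> - supp (Pg j) u" if "j \<in> Jx" for j
    unfolding \<gamma>_def by (rule Min_le) (use fJ that in auto)
  have \<kappa>p: "\<kappa> > 0" unfolding \<kappa>_def using vv ww Sk by (auto simp: Min_gr_iff)
  have \<kappa>le1: "\<kappa> \<le> - supp (Cp (Suc k)) (vv (Suc k))" if "k < m" for k
    unfolding \<kappa>_def by (rule Min_le) (use that in auto)
  have \<kappa>le2: "\<kappa> \<le> - supp (Cm (Suc k)) (ww (Suc k))" if "k < m" for k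
    unfolding \<kappa>_def by (rule Min_le) (use that in auto)
  have \<epsilon>p: "\<epsilon> > 0" unfolding \<epsilon>_def using eta \<gamma>p MWnn MGnn by auto
  have \<epsilon>1: "\<epsilon> \<le> 1" unfolding \<epsilon>_def by auto
  have \<epsilon>W: "\<epsilon> * MW < \<eta>"
  proof -
    have "\<epsilon> * MW \<le> (\<eta> / (2 * (MW + 1))) * MW" unfolding \<epsilon>_def using MWnn by (intro mult_right_mono) auto
    also have "\<dots> = \<eta> * (MW / (2 * (MW + 1)))" by simp
    also have "\<dots> < \<eta> * 1" using eta MWnn by (intro mult_strict_left_mono) (auto simp: field_simps)
    finally show ?thesis by simp
  qed
  have \<epsilon>G: "\<epsilon> * MG \<le> \<gamma> / 2"
  proof -
    have "\<epsilon> * MG \<le> (\<gamma> / (2 * (MG + 1))) * MG" unfolding \<epsilon>_def using MGnn by (intro mult_right_mono) auto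
    also have "\<dots> \<le> \<gamma> / 2" using \<gamma>p MGnn by (simp add: field_simps)
    finally show ?thesis .
  qed
  have sB: "\<bar>s k\<bar> \<le> 1" if "s \<in> Bl" "k < m" for s k
  proof -
    have "(s k)^2 \<le> nrm m s" unfolding nrm_def by (rule member_le_sum) (use that in auto)
    then show ?thesis using that by (simp add: Bl_def abs_square_le_1[symmetric])
  qed
  have pq1: "0 \<le> max (s k) 0 \<and> max (s k) 0 \<le> 1 \<and> 0 \<le> max (- s k) 0 \<and> max (- s k) 0 \<le> 1" if "s \<in> Bl" "k < m" for s k
    using sB[OF that] by (auto simp: abs_le_iff)
  have dnorm: "norm (d s - u) < \<eta>" if s: "s \<in> Bl" for s
  proof -
    have "norm (\<Sum>k<m. max (s k) 0 *\<^sub>R ww (Suc k) + max (- s k) 0 *\<^sub>R vv (Suc k))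
        \<le> (\<Sum>k<m. norm (max (s k) 0 *\<^sub>R ww (Suc k) + max (- s k) 0 *\<^sub>R vv (Suc k)))" by (rule norm_sum)
    also have "\<dots> \<le> MW" unfolding MW_def
    proof (rule sum_mono)
      fix k assume "k \<in> {..<m}"
      then have p: "0 \<le> max (s k) 0 \<and> max (s k) 0 \<le> 1 \<and> 0 \<le> max (- s k) 0 \<and> max (- s k) 0 \<le> 1" using pq1 s by auto
      have "norm (max (s k) 0 *\<^sub>R ww (Suc k) + max (- s k) 0 *\<^sub>R vv (Suc k))
          \<le> norm (max (s k) 0 *\<^sub>R ww (Suc k)) + norm (max (- s k) 0 *\<^sub>R vv (Suc k))" by (rule norm_triangle_ineq)
      also have "\<dots> = max (s k) 0 * norm (ww (Suc k)) + max (- s k) 0 * norm (vv (Suc k))" using p by simp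
      also have "\<dots> \<le> norm (ww (Suc k)) + norm (vv (Suc k))"
        using p by (intro add_mono frac_le_abs[THEN order.trans]) auto
      finally show "norm (max (s k) 0 *\<^sub>R ww (Suc k) + max (- s k) 0 *\<^sub>R vv (Suc k)) \<le> norm (ww (Suc k)) + norm (vv (Suc k))" .
    qed
    finally have "norm (d s - u) \<le> \<epsilon> * MW" using \<epsilon>p by (simp add: d_def mult_left_mono)
    then show ?thesis using \<epsilon>W by linarith
  qed
  have dspan: "d s - u \<in> span BB" for s
  proof -
    have "(\<Sum>k<m. max (s k) 0 *\<^sub>R ww (Suc k) + max (- s k) 0 *\<^sub>R vv (Suc k)) \<in> span BB"
      by (intro span_sum span_add span_scale span_base) (auto simp: BB_def)
    then show ?thesis by (simp add: d_def span_scale)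
  qed
  have fBB: "finite BB" by (simp add: BB_def)
  have dcont: "continuous_on UNIV d"
    unfolding d_def
    by (intro continuous_on_add continuous_on_const continuous_on_scaleR continuous_on_sum
        continuous_on_max continuous_on_minus continuous_on_product_coordinates)
  have cBl: "compact Bl" unfolding Bl_def by (rule Bl_compact)
  define D where "D = d ` Bl"
  have cD: "compact D" unfolding D_def by (rule compact_continuous_image[OF continuous_on_subset[OF dcont] cBl]) simp
  have DB: "dd - u \<in> span BB" if "dd \<in> D" for dd using that dspan by (auto simp: D_def)

  have fkey: "\<epsilon> * \<kappa> * (s k)^2 \<le> s k * dir_deriv (f (Suc k)) xb (d s)" if s: "s \<in> Bl" and k: "k < m" for s k
  proof -
    let ?i = "Suc k"
    have iI: "?i \<in> {1..m}" using k by auto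
    have pq: "\<And>k'. k' \<in> {..<m} \<Longrightarrow> max (s k') 0 \<ge> 0 \<and> max (- s k') 0 \<ge> 0" by auto
    show ?thesis
    proof (cases "s k \<ge> 0")
      case True
      define T where "T k' = max (s k') 0 * supp (Cm ?i) (ww (Suc k')) + max (- s k') 0 * supp (Cm ?i) (vv (Suc k'))" for k'
      have "supp (Cm ?i) (d s) \<le> supp (Cm ?i) u + \<epsilon> * (\<Sum>k'<m. T k')"
        unfolding d_def T_def using Cne[OF iI] \<epsilon>p pq by (intro supp_dir_bound) auto
      moreover have "(\<Sum>k'<m. T k') \<le> T k"
      proof (rule sum_le_single)
        fix k' assume k': "k' \<in> {..<m} - {k}"
        then have k'I: "Suc k' \<in> {1..m}" "?i \<in> {1..m} - {Suc k'}" using k by auto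
        have "supp (Cm ?i) (ww (Suc k')) \<le> 0" using ww[OF k'I(1)] k'I(2) by blast
        moreover have "supp (Cm ?i) (vv (Suc k')) \<le> 0" using vv[OF k'I(1)] k'I(2) by blast
        ultimately show "T k' \<le> 0" unfolding T_def
          by (intro add_nonpos_nonpos mult_nonneg_nonpos) auto
      qed (use k in auto)
      moreover have "T k \<le> - \<kappa> * s k"
      proof -
        have "T k = s k * supp (Cm ?i) (ww ?i)" using True by (simp add: T_def)
        also have "\<dots> \<le> s k * (- \<kappa>)" using True \<kappa>le2[OF k] by (intro mult_left_mono) auto
        finally show ?thesis by (simp add: mult.commute)
      qed
      moreover have "supp (Cm ?i) u \<le> 0" using uC[OF iI] by simp
      ultimately have "supp (Cm ?i) (d s) \<le> \<epsilon> * (- \<kappa> * s k)"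
        using \<epsilon>p by (smt (verit) mult_left_mono)
      then have "\<epsilon> * \<kappa> * s k \<le> dir_deriv (f ?i) xb (d s)" using flo[OF iI, of "d s"] by simp
      then have "s k * (\<epsilon> * \<kappa> * s k) \<le> s k * dir_deriv (f ?i) xb (d s)" using True by (rule mult_left_mono)
      then show ?thesis by (simp add: power2_eq_square algebra_simps)
    next
      case False
      define T where "T k' = max (s k') 0 * supp (Cp ?i) (ww (Suc k')) + max (- s k') 0 * supp (Cp ?i) (vv (Suc k'))" for k'
      have "supp (Cp ?i) (d s) \<le> supp (Cp ?i) u + \<epsilon> * (\<Sum>k'<m. T k')"
        unfolding d_def T_def using Cne[OF iI] \<epsilon>p pq by (intro supp_dir_bound) auto
      moreover have "(\<Sum>k'<m. T k') \<le> T k"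
      proof (rule sum_le_single)
        fix k' assume k': "k' \<in> {..<m} - {k}"
        then have k'I: "Suc k' \<in> {1..m}" "?i \<in> {1..m} - {Suc k'}" using k by auto
        have "supp (Cp ?i) (ww (Suc k')) \<le> 0" using ww[OF k'I(1)] k'I(2) by blast
        moreover have "supp (Cp ?i) (vv (Suc k')) \<le> 0" using vv[OF k'I(1)] k'I(2) by blast
        ultimately show "T k' \<le> 0" unfolding T_def
          by (intro add_nonpos_nonpos mult_nonneg_nonpos) auto
      qed (use k in auto)
      moreover have "T k \<le> \<kappa> * s k"
      proof -
        have "T k = (- s k) * supp (Cp ?i) (vv ?i)" using False by (simp add: T_def)
        also have "\<dots> \<le> (- s k) * (- \<kappa>)" using False \<kappa>le1[OF k] by (intro mult_left_mono) auto
        finally show ?thesis by (simp add: mult.commute)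
      qed
      moreover have "supp (Cp ?i) u \<le> 0" using uC[OF iI] by simp
      ultimately have "supp (Cp ?i) (d s) \<le> \<epsilon> * (\<kappa> * s k)"
        using \<epsilon>p by (smt (verit) mult_left_mono)
      then have "dir_deriv (f ?i) xb (d s) \<le> \<epsilon> * \<kappa> * s k" using fup[OF iI, of "d s"] by simp
      then have "s k * (\<epsilon> * \<kappa> * s k) \<le> s k * dir_deriv (f ?i) xb (d s)" using False
        by (intro mult_left_mono_neg) auto
      then show ?thesis by (simp add: power2_eq_square algebra_simps)
    qed
  qed

  have gkey: "dir_deriv (g j) xb (d s) \<le> - \<gamma> / 2" if s: "s \<in> Bl" and j: "j \<in> Jx" for s j
  proof -
    define T where "T k' = max (s k') 0 * supp (Pg j) (ww (Suc k')) + max (- s k') 0 * supp (Pg j) (vv (Suc k'))" for k'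
    have "supp (Pg j) (d s) \<le> supp (Pg j) u + \<epsilon> * (\<Sum>k'<m. T k')"
      unfolding d_def T_def using Pne[OF j] \<epsilon>p by (intro supp_dir_bound) auto
    moreover have "(\<Sum>k'<m. T k') \<le> Mg j"
      unfolding Mg_def
    proof (rule sum_mono)
      fix k assume "k \<in> {..<m}"
      then have p: "0 \<le> max (s k) 0 \<and> max (s k) 0 \<le> 1 \<and> 0 \<le> max (- s k) 0 \<and> max (- s k) 0 \<le> 1" using pq1 s by auto
      then show "T k \<le> \<bar>supp (Pg j) (ww (Suc k))\<bar> + \<bar>supp (Pg j) (vv (Suc k))\<bar>"
        unfolding T_def by (intro add_mono frac_le_abs) auto
    qed
    ultimately have "supp (Pg j) (d s) \<le> supp (Pg j) u + \<epsilon> * Mg j"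
      using \<epsilon>p by (smt (verit) mult_left_mono)
    moreover have "\<epsilon> * Mg j \<le> \<gamma> / 2" using \<epsilon>G Mgle[OF j] \<epsilon>p by (smt (verit) mult_left_mono)
    moreover have "supp (Pg j) u \<le> - \<gamma>" using \<gamma>le[OF j] by simp
    ultimately show ?thesis using gup[OF j, of "d s"] by linarith
  qed

  define \<theta> where "\<theta> = \<epsilon> * \<kappa> / (2 * (real m + 1))"
  have \<theta>p: "\<theta> > 0" using \<epsilon>p \<kappa>p by (simp add: \<theta>_def)
  have m\<theta>: "real m * \<theta> < \<epsilon> * \<kappa>"
  proof -
    have "real m * \<theta> = (\<epsilon> * \<kappa>) * (real m / (2 * (real m + 1)))" by (simp add: \<theta>_def field_simps)
    also have "\<dots> < (\<epsilon> * \<kappa>) * 1" using \<epsilon>p \<kappa>p by (intro mult_strict_left_mono) (auto simp: field_simps)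
    finally show ?thesis by simp
  qed
  have EF: "\<forall>i\<in>{1..m}. eventually (\<lambda>t. \<forall>dd\<in>D. \<bar>(f i (xb + t *\<^sub>R dd) - f i xb) / t - dir_deriv (f i) xb dd\<bar> < \<theta>) (at_right 0)"
    using unif_compact[OF fud cD fBB DB \<theta>p] by blast
  have EG: "\<forall>j\<in>Jx. eventually (\<lambda>t. \<forall>dd\<in>D. \<bar>(g j (xb + t *\<^sub>R dd) - g j xb) / t - dir_deriv (g j) xb dd\<bar> < \<gamma>/4) (at_right 0)"
  proof
    fix j assume "j \<in> Jx"
    show "eventually (\<lambda>t. \<forall>dd\<in>D. \<bar>(g j (xb + t *\<^sub>R dd) - g j xb) / t - dir_deriv (g j) xb dd\<bar> < \<gamma>/4) (at_right 0)"
      by (rule unif_compact[OF gud[OF \<open>j \<in> Jx\<close>] cD fBB DB]) (use \<gamma>p in auto)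
  qed
  obtain SS where SS: "\<And>i. i \<in> {1..m} \<Longrightarrow> open (SS i) \<and> xb \<in> SS i \<and> continuous_on (SS i) (f i)"
    using fcont by metis
  define Sall where "Sall = (\<Inter>i\<in>{1..m}. SS i)"
  have "open Sall" unfolding Sall_def using SS by (intro open_INT) auto
  moreover have "xb \<in> Sall" unfolding Sall_def using SS by auto
  ultimately obtain \<rho>1 where \<rho>1: "\<rho>1 > 0" "ball xb \<rho>1 \<subseteq> Sall" by (meson openE)
  have "\<forall>j\<in>{1..l} - Jx. \<exists>\<rho>>0. \<forall>y. dist y xb < \<rho> \<longrightarrow> g j y < 0"
  proof
    fix j assume j: "j \<in> {1..l} - Jx"
    then have u: "usc_at (g j) xb" and neg: "g j xb < 0" using ginact by auto
    have "\<forall>e>0. eventually (\<lambda>y. g j y < g j xb + e) (at xb)" using u unfolding usc_at_def by blast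
    then have "eventually (\<lambda>y. g j y < g j xb + (- g j xb)) (at xb)" using neg by (meson neg_0_less_iff_less)
    then obtain \<rho> where "\<rho> > 0" "\<forall>y. y \<noteq> xb \<and> dist y xb < \<rho> \<longrightarrow> g j y < 0" unfolding eventually_at by auto
    then show "\<exists>\<rho>>0. \<forall>y. dist y xb < \<rho> \<longrightarrow> g j y < 0" using neg by metis
  qed
  then obtain \<rho>g where \<rho>g: "\<And>j. j \<in> {1..l} - Jx \<Longrightarrow> \<rho>g j > 0 \<and> (\<forall>y. dist y xb < \<rho>g j \<longrightarrow> g j y < 0)"
    by metis
  define \<rho> where "\<rho> = Min (insert \<rho>1 (\<rho>g ` ({1..l} - Jx)))"
  have \<rho>p: "\<rho> > 0" unfolding \<rho>_def using \<rho>1 \<rho>g by (auto simp: Min_gr_iff)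
  have \<rho>le1: "\<rho> \<le> \<rho>1" unfolding \<rho>_def by (rule Min_le) auto
  have \<rho>leg: "\<rho> \<le> \<rho>g j" if "j \<in> {1..l} - Jx" for j unfolding \<rho>_def by (rule Min_le) (use that in auto)
  define R where "R = norm u + \<eta> + 1"
  have Rp: "R > 0" using eta by (simp add: R_def add_nonneg_pos)
  define \<tau> where "\<tau> = min \<eta> (\<rho> / R)"
  have \<tau>p: "\<tau> > 0" using eta \<rho>p Rp by (simp add: \<tau>_def)
  have "eventually (\<lambda>t. t \<in> {0<..<\<tau>} \<and> (\<forall>i\<in>{1..m}. \<forall>dd\<in>D. \<bar>(f i (xb + t *\<^sub>R dd) - f i xb) / t - dir_deriv (f i) xb dd\<bar> < \<theta>)
      \<and> (\<forall>j\<in>Jx. \<forall>dd\<in>D. \<bar>(g j (xb + t *\<^sub>R dd) - g j xb) / t - dir_deriv (g j) xb dd\<bar> < \<gamma>/4)) (at_right 0)"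
    by (intro eventually_conj eventually_at_right_real[OF \<tau>p] eventually_ball_finite EF EG fJ finite_atLeastAtMost)
  then obtain t where t: "t \<in> {0<..<\<tau>}"
    and tF: "\<forall>i\<in>{1..m}. \<forall>dd\<in>D. \<bar>(f i (xb + t *\<^sub>R dd) - f i xb) / t - dir_deriv (f i) xb dd\<bar> < \<theta>"
    and tG: "\<forall>j\<in>Jx. \<forall>dd\<in>D. \<bar>(g j (xb + t *\<^sub>R dd) - g j xb) / t - dir_deriv (g j) xb dd\<bar> < \<gamma>/4"
    using eventually_happens'[OF trivial_limit_at_right_real] by blast
  have tp: "t > 0" and teta: "t < \<eta>" using t by (auto simp: \<tau>_def)
  have close: "dist (xb + t *\<^sub>R d s) xb < \<rho>" if s: "s \<in> Bl" for s
  proof -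
    have "norm (d s) \<le> norm u + norm (d s - u)" by (metis add.commute diff_add_cancel norm_triangle_ineq)
    then have nd: "norm (d s) < R" using dnorm[OF s] by (simp add: R_def)
    have "dist (xb + t *\<^sub>R d s) xb = t * norm (d s)" using tp by (simp add: dist_norm)
    also have "\<dots> \<le> t * R" using tp nd by (intro mult_left_mono) auto
    also have "\<dots> < (\<rho> / R) * R" using t Rp by (intro mult_strict_right_mono) (auto simp: \<tau>_def)
    also have "\<dots> = \<rho>" using Rp by simp
    finally show ?thesis .
  qed
  have inS: "xb + t *\<^sub>R d s \<in> SS i" if "s \<in> Bl" "i \<in> {1..m}" for s i
  proof -
    have "xb + t *\<^sub>R d s \<in> ball xb \<rho>1" using close[OF that(1)] \<rho>le1 by (simp add: dist_commute)
    then show ?thesis using \<rho>1(2) that(2) by (auto simp: Sall_def)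
  qed
  define F where "F s k = (if k < m then (f (Suc k) (xb + t *\<^sub>R d s) - f (Suc k) xb) / t else 0)" for s k
  have Fcont: "continuous_on {s. nrm m s \<le> 1 \<and> (\<forall>i\<ge>m. s i = 0)} F"
  proof (rule continuous_on_coordinatewise_then_product)
    fix k
    show "continuous_on {s. nrm m s \<le> 1 \<and> (\<forall>i\<ge>m. s i = 0)} (\<lambda>s. F s k)"
    proof (cases "k < m")
      case True
      then have kI: "Suc k \<in> {1..m}" by auto
      have c1: "continuous_on Bl (\<lambda>s. xb + t *\<^sub>R d s)"
        by (intro continuous_on_add continuous_on_const continuous_on_scaleR continuous_on_subset[OF dcont]) auto
      have "continuous_on Bl (\<lambda>s. f (Suc k) (xb + t *\<^sub>R d s))"
        by (rule continuous_on_compose2[OF conjunct2[OF conjunct2[OF SS[OF kI]]] c1]) (use inS kI in auto)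
      then have "continuous_on Bl (\<lambda>s. (f (Suc k) (xb + t *\<^sub>R d s) - f (Suc k) xb) / t)"
        by (intro continuous_on_divide continuous_on_diff continuous_on_const) (use tp in auto)
      then show ?thesis using True by (simp add: F_def Bl_def)
    next
      case False then show ?thesis by (simp add: F_def)
    qed
  qed
  have Fsph: "(\<Sum>k<m. s k * F s k) > 0" if s1: "nrm m s = 1" and s0: "\<forall>i\<ge>m. s i = 0" for s
  proof -
    have s: "s \<in> Bl" using s1 s0 by (simp add: Bl_def)
    have dsD: "d s \<in> D" using s by (simp add: D_def)
    have trm: "\<epsilon> * \<kappa> * (s k)^2 - \<theta> \<le> s k * F s k" if k: "k < m" for k
    proof -
      have kI: "Suc k \<in> {1..m}" using k by auto
      have A: "\<bar>F s k - dir_deriv (f (Suc k)) xb (d s)\<bar> < \<theta>" using tF kI dsD k by (simp add: F_def)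
      have "\<bar>s k * (F s k - dir_deriv (f (Suc k)) xb (d s))\<bar> \<le> 1 * \<theta>"
        unfolding abs_mult using sB[OF s k] A by (intro mult_mono) auto
      then have "- \<theta> \<le> s k * (F s k - dir_deriv (f (Suc k)) xb (d s))" by linarith
      moreover have "\<epsilon> * \<kappa> * (s k)^2 \<le> s k * dir_deriv (f (Suc k)) xb (d s)" by (rule fkey[OF s k])
      ultimately show ?thesis by (simp add: algebra_simps)
    qed
    have "(\<Sum>k<m. \<epsilon> * \<kappa> * (s k)^2 - \<theta>) \<le> (\<Sum>k<m. s k * F s k)" using trm by (intro sum_mono) auto
    moreover have "(\<Sum>k<m. \<epsilon> * \<kappa> * (s k)^2 - \<theta>) = \<epsilon> * \<kappa> - real m * \<theta>"
      using s1 by (simp add: sum_subtractf sum_distrib_left[symmetric] nrm_def)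
    ultimately show ?thesis using m\<theta> by linarith
  qed
  obtain s where s: "nrm m s \<le> 1" "\<forall>i\<ge>m. s i = 0" "\<forall>i<m. F s i = 0"
    using zero_lemma[OF Fcont Fsph] by blast
  have sBl: "s \<in> Bl" using s by (simp add: Bl_def)
  have dsD: "d s \<in> D" using sBl by (simp add: D_def)
  show ?thesis
  proof (intro exI conjI ballI)
    show "0 < t" "t < \<eta>" by (fact tp, fact teta)
    show "norm (d s - u) < \<eta>" by (rule dnorm[OF sBl])
    fix i assume i: "i \<in> {1..m}"
    then obtain k where k: "i = Suc k" "k < m" by (cases i) auto
    have "(f i (xb + t *\<^sub>R d s) - f i xb) / t = 0" using s(3) k by (simp add: F_def)
    then show "f i (xb + t *\<^sub>R d s) = 0" using tp f0[OF i] by simp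
  next
    fix j assume j: "j \<in> {1..l}"
    show "g j (xb + t *\<^sub>R d s) \<le> 0"
    proof (cases "j \<in> Jx")
      case True
      have "\<bar>(g j (xb + t *\<^sub>R d s) - g j xb) / t - dir_deriv (g j) xb (d s)\<bar> < \<gamma>/4" using tG True dsD by blast
      moreover have "dir_deriv (g j) xb (d s) \<le> - \<gamma> / 2" by (rule gkey[OF sBl True])
      ultimately have "(g j (xb + t *\<^sub>R d s) - g j xb) / t < 0" using \<gamma>p by linarith
      then have "g j (xb + t *\<^sub>R d s) - g j xb < 0" using tp by (simp add: divide_less_0_iff)
      then show ?thesis using g0[OF True] by simp
    next
      case False
      then have jj: "j \<in> {1..l} - Jx" using j by simp
      have "dist (xb + t *\<^sub>R d s) xb < \<rho>g j" using close[OF sBl] \<rho>leg[OF jj] by linarith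
      then show ?thesis using \<rho>g[OF jj] by (simp add: less_imp_le)
    qed
  qed
qed

lemma hull_compact:
  fixes PP :: "nat \<Rightarrow> ('a::real_normed_vector \<Rightarrow>\<^sub>L real) set"
  assumes J: "finite J" and PP: "\<And>j. j \<in> J \<Longrightarrow> compactin weak_star (PP j)"
  shows "compactin weak_star {\<Sum>j\<in>J. c j *\<^sub>R s j | c s. (\<forall>j\<in>J. c j \<ge> 0) \<and> sum c J = 1 \<and> (\<forall>j\<in>J. s j \<in> PP j)}"
proof -
  define X where "X = product_topology (\<lambda>j. prod_topology euclideanreal (weak_star :: ('a \<Rightarrow>\<^sub>L real) topology)) J"
  define Kp where "Kp = PiE J (\<lambda>j. {0..1::real} \<times> PP j)"
  have cK: "compactin X Kp"
    unfolding X_def Kp_def compactin_PiE compactin_Times using PP by auto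
  define \<sigma> where "\<sigma> \<theta> = (\<Sum>j\<in>J. fst (\<theta> j))" for \<theta> :: "nat \<Rightarrow> real \<times> ('a \<Rightarrow>\<^sub>L real)"
  have cproj: "continuous_map X (prod_topology euclideanreal weak_star) (\<lambda>\<theta>. \<theta> j)" if "j \<in> J" for j
    unfolding X_def using that by (rule continuous_map_product_projection)
  have cfst: "continuous_map X euclideanreal (\<lambda>\<theta>. fst (\<theta> j))" if "j \<in> J" for j
    using continuous_map_compose[OF cproj[OF that] continuous_map_fst] by (simp add: o_def)
  have csnd: "continuous_map X weak_star (\<lambda>\<theta>. snd (\<theta> j))" if "j \<in> J" for j
    using continuous_map_compose[OF cproj[OF that] continuous_map_snd] by (simp add: o_def)
  have c\<sigma>: "continuous_map X euclideanreal \<sigma>"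
    unfolding \<sigma>_def by (rule continuous_map_sum) (use J cfst in auto)
  have clC: "closedin X {\<theta> \<in> topspace X. \<sigma> \<theta> \<in> {1}}"
    by (rule closedin_continuous_map_preimage[OF c\<sigma>]) simp
  have cP: "compactin X ({\<theta> \<in> topspace X. \<sigma> \<theta> \<in> {1}} \<inter> Kp)"
    by (rule closed_Int_compactin[OF clC cK])
  define \<Phi> where "\<Phi> \<theta> = (\<Sum>j\<in>J. fst (\<theta> j) *\<^sub>R snd (\<theta> j))" for \<theta> :: "nat \<Rightarrow> real \<times> ('a \<Rightarrow>\<^sub>L real)"
  have c\<Phi>: "continuous_map X weak_star \<Phi>"
    unfolding weak_star_def
  proof (rule continuous_map_pullback')
    show "topspace X \<subseteq> \<Phi> -` UNIV" by simp
    show "continuous_map X (product_topology (\<lambda>_. euclideanreal) UNIV) (blinfun_apply \<circ> \<Phi>)"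
      unfolding continuous_map_componentwise_UNIV
    proof
      fix v
      have eq: "(\<lambda>\<theta>. (blinfun_apply \<circ> \<Phi>) \<theta> v) = (\<lambda>\<theta>. \<Sum>j\<in>J. fst (\<theta> j) * blinfun_apply (snd (\<theta> j)) v)"
        by (simp add: \<Phi>_def blinfun.sum_left blinfun.scaleR_left)
      have "continuous_map X euclideanreal (\<lambda>\<theta>. \<Sum>j\<in>J. fst (\<theta> j) * blinfun_apply (snd (\<theta> j)) v)"
      proof (rule continuous_map_sum)
        show "finite J" by (rule J)
        fix j assume j: "j \<in> J"
        have "continuous_map X euclideanreal (\<lambda>\<theta>. blinfun_apply (snd (\<theta> j)) v)"
          using continuous_map_compose[OF csnd[OF j] ws_eval] by (simp add: o_def)
        then show "continuous_map X euclideanreal (\<lambda>\<theta>. fst (\<theta> j) * blinfun_apply (snd (\<theta> j)) v)"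
          by (intro continuous_map_real_mult cfst[OF j])
      qed
      then show "continuous_map X euclideanreal (\<lambda>\<theta>. (blinfun_apply \<circ> \<Phi>) \<theta> v)" by (simp only: eq)
    qed
  qed
  have eqE: "{\<Sum>j\<in>J. c j *\<^sub>R s j | c s. (\<forall>j\<in>J. c j \<ge> 0) \<and> sum c J = 1 \<and> (\<forall>j\<in>J. s j \<in> PP j)}
      = \<Phi> ` ({\<theta> \<in> topspace X. \<sigma> \<theta> \<in> {1}} \<inter> Kp)"
  proof
    show "{\<Sum>j\<in>J. c j *\<^sub>R s j | c s. (\<forall>j\<in>J. c j \<ge> 0) \<and> sum c J = 1 \<and> (\<forall>j\<in>J. s j \<in> PP j)}
      \<subseteq> \<Phi> ` ({\<theta> \<in> topspace X. \<sigma> \<theta> \<in> {1}} \<inter> Kp)"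
    proof
      fix e assume "e \<in> {\<Sum>j\<in>J. c j *\<^sub>R s j | c s. (\<forall>j\<in>J. c j \<ge> 0) \<and> sum c J = 1 \<and> (\<forall>j\<in>J. s j \<in> PP j)}"
      then obtain c s where cs: "e = (\<Sum>j\<in>J. c j *\<^sub>R s j)" "\<forall>j\<in>J. c j \<ge> 0" "sum c J = 1" "\<forall>j\<in>J. s j \<in> PP j"
        by blast
      define \<theta> where "\<theta> = restrict (\<lambda>j. (c j, s j)) J"
      have c1: "c j \<le> 1" if "j \<in> J" for j
      proof -
        have "c j \<le> sum c J" by (rule member_le_sum) (use that cs J in auto)
        then show ?thesis using cs by simp
      qed
      have "\<theta> \<in> Kp" using cs c1 by (auto simp: \<theta>_def Kp_def)
      moreover have "\<theta> \<in> topspace X" using cs c1 PP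
        by (auto simp: X_def \<theta>_def compactin_subset_topspace dest: compactin_subset_topspace)
      moreover have "\<sigma> \<theta> = 1" using cs by (simp add: \<sigma>_def \<theta>_def)
      moreover have "\<Phi> \<theta> = e" using cs by (simp add: \<Phi>_def \<theta>_def)
      ultimately show "e \<in> \<Phi> ` ({\<theta> \<in> topspace X. \<sigma> \<theta> \<in> {1}} \<inter> Kp)" by blast
    qed
    show "\<Phi> ` ({\<theta> \<in> topspace X. \<sigma> \<theta> \<in> {1}} \<inter> Kp)
      \<subseteq> {\<Sum>j\<in>J. c j *\<^sub>R s j | c s. (\<forall>j\<in>J. c j \<ge> 0) \<and> sum c J = 1 \<and> (\<forall>j\<in>J. s j \<in> PP j)}"
    proof
      fix e assume "e \<in> \<Phi> ` ({\<theta> \<in> topspace X. \<sigma> \<theta> \<in> {1}} \<inter> Kp)"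
      then obtain \<theta> where \<theta>: "\<sigma> \<theta> = 1" "\<theta> \<in> Kp" "e = \<Phi> \<theta>" by auto
      have "\<forall>j\<in>J. fst (\<theta> j) \<ge> 0" "\<forall>j\<in>J. snd (\<theta> j) \<in> PP j" using \<theta>(2) by (auto simp: Kp_def PiE_iff)
      then show "e \<in> {\<Sum>j\<in>J. c j *\<^sub>R s j | c s. (\<forall>j\<in>J. c j \<ge> 0) \<and> sum c J = 1 \<and> (\<forall>j\<in>J. s j \<in> PP j)}"
        using \<theta> unfolding \<Phi>_def \<sigma>_def
        by (intro CollectI exI[of _ "\<lambda>j. fst (\<theta> j)"] exI[of _ "\<lambda>j. snd (\<theta> j)"]) auto
    qed
  qed
  show ?thesis unfolding eqE by (rule image_compactin[OF cP c\<Phi>])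
qed

lemma cone_fam_zero: "0 \<in> cone_fam CC"
  unfolding cone_fam_def by (intro CollectI exI[of _ "{}"]) auto

lemma cone_fam_base: "u \<in> C \<Longrightarrow> C \<in> CC \<Longrightarrow> u \<in> cone_fam CC"
  unfolding cone_fam_def by (intro CollectI exI[of _ "{u}"] exI[of _ "\<lambda>_. 1"]) auto

lemma cone_fam_scale: "c \<ge> 0 \<Longrightarrow> y \<in> cone_fam CC \<Longrightarrow> c *\<^sub>R y \<in> cone_fam CC"
proof -
  assume c: "c \<ge> 0" and y: "y \<in> cone_fam CC"
  then obtain F d where F: "finite F" "F \<subseteq> \<Union>CC" "\<forall>u\<in>F. d u \<ge> 0" "y = (\<Sum>u\<in>F. d u *\<^sub>R u)"
    unfolding cone_fam_def by blast
  have "c *\<^sub>R y = (\<Sum>u\<in>F. (c * d u) *\<^sub>R u)" using F(4) by (simp add: scaleR_sum_right)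
  then show ?thesis unfolding cone_fam_def using F c
    by (intro CollectI exI[of _ F] exI[of _ "\<lambda>u. c * d u"]) auto
qed

lemma cone_fam_add: "y1 \<in> cone_fam CC \<Longrightarrow> y2 \<in> cone_fam CC \<Longrightarrow> y1 + y2 \<in> cone_fam CC"
proof -
  assume "y1 \<in> cone_fam CC" "y2 \<in> cone_fam CC"
  then obtain F1 d1 F2 d2 where F1: "finite F1" "F1 \<subseteq> \<Union>CC" "\<forall>u\<in>F1. d1 u \<ge> 0" "y1 = (\<Sum>u\<in>F1. d1 u *\<^sub>R u)"
    and F2: "finite F2" "F2 \<subseteq> \<Union>CC" "\<forall>u\<in>F2. d2 u \<ge> 0" "y2 = (\<Sum>u\<in>F2. d2 u *\<^sub>R u)"
    unfolding cone_fam_def by blast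
  define d where "d u = (if u \<in> F1 then d1 u else 0) + (if u \<in> F2 then d2 u else 0)" for u
  have s1: "(\<Sum>u\<in>F1 \<union> F2. (if u \<in> F1 then d1 u else 0) *\<^sub>R u) = y1"
  proof -
    have "(\<Sum>u\<in>F1 \<union> F2. (if u \<in> F1 then d1 u else 0) *\<^sub>R u) = (\<Sum>u\<in>F1. (if u \<in> F1 then d1 u else 0) *\<^sub>R u)"
      by (rule sum.mono_neutral_right) (use F1 F2 in auto)
    also have "\<dots> = y1" using F1 by simp
    finally show ?thesis .
  qed
  have s2: "(\<Sum>u\<in>F1 \<union> F2. (if u \<in> F2 then d2 u else 0) *\<^sub>R u) = y2"
  proof -
    have "(\<Sum>u\<in>F1 \<union> F2. (if u \<in> F2 then d2 u else 0) *\<^sub>R u) = (\<Sum>u\<in>F2. (if u \<in> F2 then d2 u else 0) *\<^sub>R u)"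
      by (rule sum.mono_neutral_right) (use F1 F2 in auto)
    also have "\<dots> = y2" using F2 by simp
    finally show ?thesis .
  qed
  have "y1 + y2 = (\<Sum>u\<in>F1 \<union> F2. d u *\<^sub>R u)"
    unfolding d_def scaleR_add_left sum.distrib s1 s2 ..
  then show ?thesis unfolding cone_fam_def using F1 F2
    by (intro CollectI exI[of _ "F1 \<union> F2"] exI[of _ d]) (auto simp: d_def)
qed

lemma sum_neg_witness:
  fixes T :: "'b \<Rightarrow> real"
  assumes "finite K" "k \<in> K" "T k < 0" "\<And>k'. k' \<in> K \<Longrightarrow> T k' \<le> 0"
  shows "sum T K < 0"
proof -
  have "sum T K = T k + sum T (K - {k})" using assms(1,2) by (rule sum.remove)
  moreover have "sum T (K - {k}) \<le> 0" using assms(4) by (intro sum_nonpos) auto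
  ultimately show ?thesis using assms(3) by linarith
qed

lemma qd_props:
  assumes "quasidiff f x L U"
  shows "L \<noteq> {}" "U \<noteq> {}" "bddE L" "bddE U" "convex L" "compactin weak_star L"
    "dir_diff f x" "\<And>d. dir_deriv f x d = Sup ((\<lambda>a. blinfun_apply a d) ` L) + Inf ((\<lambda>b. blinfun_apply b d) ` U)"
  using assms ws_compact_bounded unfolding quasidiff_def bddE_def by auto

lemma qd_up: "quasidiff f x L U \<Longrightarrow> y \<in> U \<Longrightarrow> dir_deriv f x d \<le> supp ((\<lambda>a. a + y) ` L) d"
  by (rule qd_upper[OF qd_props(1,3,4) _ qd_props(8)])

lemma qd_lo: "quasidiff f x L U \<Longrightarrow> xx \<in> L \<Longrightarrow> - supp ((\<lambda>b. - xx - b) ` U) d \<le> dir_deriv f x d"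
  by (rule qd_lower[OF qd_props(3,2,4) _ qd_props(8)])

lemma ws_translate_compact:
  fixes L :: "('a::real_normed_vector \<Rightarrow>\<^sub>L real) set"
  assumes "compactin weak_star L"
  shows "compactin weak_star ((\<lambda>a. a + y) ` L)"
proof (rule image_compactin[OF assms])
  show "continuous_map weak_star weak_star (\<lambda>a. a + y)"
    unfolding weak_star_def[of]
  proof (rule continuous_map_pullback')
    show "topspace (pullback_topology UNIV blinfun_apply (product_topology (\<lambda>_. euclideanreal) UNIV)) \<subseteq> (\<lambda>a. a + y) -` UNIV" by simp
    show "continuous_map (pullback_topology UNIV blinfun_apply (product_topology (\<lambda>_. euclideanreal) UNIV))
        (product_topology (\<lambda>_. euclideanreal) UNIV) (blinfun_apply \<circ> (\<lambda>a. a + y))"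
      unfolding continuous_map_componentwise_UNIV
    proof
      fix v
      have "continuous_map weak_star euclideanreal (\<lambda>a. blinfun_apply a v + blinfun_apply y v)"
        by (intro continuous_map_add ws_eval continuous_map_const[THEN iffD2]) simp
      then show "continuous_map (pullback_topology UNIV blinfun_apply (product_topology (\<lambda>_. euclideanreal) UNIV)) euclideanreal
          (\<lambda>x. (blinfun_apply \<circ> (\<lambda>a. a + y)) x v)"
        by (simp add: weak_star_def blinfun.add_left)
    qed
  qed
qed

lemma convex_translate': "convex L \<Longrightarrow> convex ((\<lambda>a. a + (y::'b::real_vector)) ` L)"
proof -
  assume "convex L"
  then have "convex ((+) y ` L)" by (rule convex_translation)
  moreover have "(+) y ` L = (\<lambda>a. a + y) ` L" by (auto simp: add.commute)
  ultimately show ?thesis by simp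
qed

theorem theorem2:
  fixes f0 :: "'a::banach \<Rightarrow> real" and f g :: "nat \<Rightarrow> 'a \<Rightarrow> real" and m l :: nat and xb :: 'a
    and L0 U0 :: "('a \<Rightarrow>\<^sub>L real) set" and Lf Uf Lg Ug :: "nat \<Rightarrow> ('a \<Rightarrow>\<^sub>L real) set"
    and xs ys z :: "nat \<Rightarrow> ('a \<Rightarrow>\<^sub>L real)" and y0 :: "'a \<Rightarrow>\<^sub>L real"
  defines "Jx \<equiv> {j\<in>{1..l}. g j xb = 0}"
  assumes opt: "loc_opt f0 f m g l xb"
    and h1: "quasidiff f0 xb L0 U0" "hadamard_dir_diff f0 xb"
    and h2: "\<forall>i\<in>{1..m}. (\<exists>S. open S \<and> xb \<in> S \<and> continuous_on S (f i)) \<and> unif_quasidiff (f i) xb (Lf i) (Uf i)"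
    and h3a: "\<forall>j\<in>{1..l} - Jx. usc_at (g j) xb \<and> quasidiff (g j) xb (Lg j) (Ug j)"
    and h3b: "\<forall>j\<in>Jx. unif_quasidiff (g j) xb (Lg j) (Ug j)"
    and hx: "\<forall>i\<in>{1..m}. xs i \<in> Lf i \<and> ys i \<in> Uf i"
    and hz: "\<forall>j\<in>Jx. z j \<in> Ug j"
    and c1: "\<forall>i\<in>{1..m}. \<exists>v. supp ((\<lambda>a. a + ys i) ` Lf i) v < 0 \<and>
               (\<forall>k\<in>{1..m} - {i}. supp ((\<lambda>a. a + ys k) ` Lf k) v \<le> 0 \<and> supp ((\<lambda>b. - xs k - b) ` Uf k) v \<le> 0)"
    and c2: "\<forall>i\<in>{1..m}. \<exists>w. supp ((\<lambda>b. - xs i - b) ` Uf i) w < 0 \<and>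
               (\<forall>k\<in>{1..m} - {i}. supp ((\<lambda>b. - xs k - b) ` Uf k) w \<le> 0 \<and> supp ((\<lambda>a. a + ys k) ` Lf k) w \<le> 0)"
    and c3: "\<exists>v0. (\<forall>j\<in>Jx. supp ((\<lambda>a. a + z j) ` Lg j) v0 < 0) \<and>
               (\<forall>i\<in>{1..m}. supp ((\<lambda>a. a + ys i) ` Lf i) v0 \<le> 0 \<and> supp ((\<lambda>b. - xs i - b) ` Uf i) v0 \<le> 0)"
    and hy0: "y0 \<in> U0"
    and hzi: "\<forall>j\<in>{1..l} - Jx. z j \<in> Ug j"
  shows "\<exists>lam::nat \<Rightarrow> real. (\<forall>j\<in>{1..l}. lam j \<ge> 0 \<and> lam j * g j xb = 0) \<and>
    (\<exists>a\<in>L0. \<exists>b. (\<forall>j\<in>{1..l}. b j \<in> Lg j) \<and>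
      (\<exists>c\<in>wstar_closure (cone_fam ((\<lambda>i. ((\<lambda>a. a + ys i) ` Lf i) \<union> ((\<lambda>b. - xs i - b) ` Uf i)) ` {1..m})).
        0 = a + y0 + (\<Sum>j\<in>{1..l}. lam j *\<^sub>R (b j + z j)) + c))"
proof -
  obtain r where r: "r > 0" "\<And>x. dist x xb < r \<Longrightarrow> (\<forall>i\<in>{1..m}. f i x = 0) \<Longrightarrow> (\<forall>j\<in>{1..l}. g j x \<le> 0) \<Longrightarrow> f0 xb \<le> f0 x"
    and fxb: "\<forall>i\<in>{1..m}. f i xb = 0" and gxb: "\<forall>j\<in>{1..l}. g j xb \<le> 0"
    using opt unfolding loc_opt_def by blast
  have JxS: "Jx \<subseteq> {1..l}" unfolding Jx_def by auto
  have fJ: "finite Jx" using JxS finite_subset by blast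
  have zJ: "0 \<notin> Jx" using JxS by auto
  define Cp where "Cp i = (\<lambda>a. a + ys i) ` Lf i" for i
  define Cm where "Cm i = (\<lambda>b. - xs i - b) ` Uf i" for i
  define Pg where "Pg j = (\<lambda>a. a + z j) ` Lg j" for j
  define P0 where "P0 = (\<lambda>a. a + y0) ` L0"
  define K where "K = cone_fam ((\<lambda>i. ((\<lambda>a. a + ys i) ` Lf i) \<union> ((\<lambda>b. - xs i - b) ` Uf i)) ` {1..m})"
  define A where "A = wstar_closure K"
  have qdf: "quasidiff (f i) xb (Lf i) (Uf i)" if "i \<in> {1..m}" for i
    using h2 that by (simp add: unif_quasidiff_def)
  have udf: "unif_dir_diff (f i) xb" if "i \<in> {1..m}" for i
    using h2 that by (simp add: unif_quasidiff_def)
  have qdg: "quasidiff (g j) xb (Lg j) (Ug j)" if "j \<in> {1..l}" for j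
    using h3a h3b that by (cases "j \<in> Jx") (auto simp: unif_quasidiff_def)
  have udg: "unif_dir_diff (g j) xb" if "j \<in> Jx" for j
    using h3b that by (simp add: unif_quasidiff_def)
  have CpCm: "Cp i \<noteq> {} \<and> Cm i \<noteq> {} \<and> bddE (Cp i) \<and> bddE (Cm i)" if "i \<in> {1..m}" for i
    using qd_props[OF qdf[OF that]] by (auto simp: Cp_def Cm_def intro: bddE_trans bddE_neg)
  have Pgp: "Pg j \<noteq> {} \<and> bddE (Pg j) \<and> convex (Pg j) \<and> compactin weak_star (Pg j)" if "j \<in> {1..l}" for j
    using qd_props[OF qdg[OF that]] by (auto simp: Pg_def intro: bddE_trans convex_translate' ws_translate_compact)
  have P0p: "P0 \<noteq> {} \<and> bddE P0 \<and> convex P0 \<and> compactin weak_star P0"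
    using qd_props[OF h1(1)] by (auto simp: P0_def intro: bddE_trans convex_translate' ws_translate_compact)

  have lemA: False
    if wC: "\<forall>i\<in>{1..m}. supp (Cp i) w \<le> 0 \<and> supp (Cm i) w \<le> 0"
      and wP: "\<forall>j\<in>Jx. supp (Pg j) w < 0" and w0: "supp P0 w < 0" for w
  proof -
    define G where "G = (\<lambda>(t::real, w'). (f0 (xb + t *\<^sub>R w') - f0 xb) / t)"
    define \<alpha> where "\<alpha> = dir_deriv f0 xb w"
    have \<alpha>n: "\<alpha> < 0" using qd_up[OF h1(1) hy0, of w] w0 by (simp add: \<alpha>_def P0_def)
    obtain Lh where Lh: "(G \<longlongrightarrow> Lh) (at (0, w) within ({0<..} \<times> UNIV))"
      using h1(2) unfolding hadamard_dir_diff_def G_def by blast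
    have Lh_ev: "\<exists>\<delta>>0. \<forall>t w'. 0 < t \<longrightarrow> dist (t, w') (0, w) < \<delta> \<longrightarrow> \<bar>G (t, w') - Lh\<bar> < e" if "e > 0" for e
    proof -
      have "eventually (\<lambda>p. dist (G p) Lh < e) (at (0, w) within ({0<..} \<times> UNIV))"
        using Lh that by (rule tendstoD)
      then obtain \<delta> where "\<delta> > 0" "\<forall>p\<in>{0<..} \<times> UNIV. p \<noteq> (0, w) \<and> dist p (0, w) < \<delta> \<longrightarrow> dist (G p) Lh < e"
        unfolding eventually_at by blast
      then show ?thesis by (auto simp: dist_real_def)
    qed
    have Lhn: "Lh < 0"
    proof -
      obtain \<delta> where \<delta>: "\<delta> > 0" "\<forall>t w'. 0 < t \<longrightarrow> dist (t, w') (0, w) < \<delta> \<longrightarrow> \<bar>G (t, w') - Lh\<bar> < - \<alpha> / 2"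
        using Lh_ev[of "- \<alpha> / 2"] \<alpha>n by auto
      have lim: "((\<lambda>t. \<bar>G (t, w) - Lh\<bar>) \<longlongrightarrow> \<bar>\<alpha> - Lh\<bar>) (at_right 0)"
        unfolding G_def \<alpha>_def using dd_tendsto[OF qd_props(7)[OF h1(1)], of w]
        by (intro tendsto_rabs tendsto_diff tendsto_const) simp
      have "eventually (\<lambda>t. t \<in> {0<..<\<delta>}) (at_right (0::real))" using \<delta>(1) by (rule eventually_at_right_real)
      then have "eventually (\<lambda>t. \<bar>G (t, w) - Lh\<bar> \<le> - \<alpha> / 2) (at_right 0)"
      proof eventually_elim
        case (elim t)
        then have "dist (t, w) (0, w) < \<delta>" by (simp add: dist_Pair_Pair dist_real_def)
        then show ?case using \<delta>(2) elim by (auto intro: less_imp_le)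
      qed
      then have "\<bar>\<alpha> - Lh\<bar> \<le> - \<alpha> / 2" by (rule tendsto_upperbound[OF lim]) simp
      then show ?thesis using \<alpha>n by linarith
    qed
    obtain \<delta> where \<delta>: "\<delta> > 0" "\<forall>t w'. 0 < t \<longrightarrow> dist (t, w') (0, w) < \<delta> \<longrightarrow> \<bar>G (t, w') - Lh\<bar> < - Lh / 2"
      using Lh_ev[of "- Lh / 2"] Lhn by auto
    define \<eta> where "\<eta> = min (\<delta> / 2) (min 1 (r / (norm w + 2)))"
    have \<eta>p: "\<eta> > 0" using \<delta> r by (simp add: \<eta>_def add_nonneg_pos)
    obtain vv where vv: "\<And>i. i \<in> {1..m} \<Longrightarrow> supp (Cp i) (vv i) < 0 \<and> (\<forall>k\<in>{1..m} - {i}. supp (Cp k) (vv i) \<le> 0 \<and> supp (Cm k) (vv i) \<le> 0)"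
      using c1 unfolding Cp_def Cm_def by metis
    obtain ww where ww: "\<And>i. i \<in> {1..m} \<Longrightarrow> supp (Cm i) (ww i) < 0 \<and> (\<forall>k\<in>{1..m} - {i}. supp (Cm k) (ww i) \<le> 0 \<and> supp (Cp k) (ww i) \<le> 0)"
      using c2 unfolding Cp_def Cm_def by metis
    have "\<exists>t w'. 0 < t \<and> t < \<eta> \<and> norm (w' - w) < \<eta> \<and> (\<forall>i\<in>{1..m}. f i (xb + t *\<^sub>R w') = 0)
           \<and> (\<forall>j\<in>{1..l}. g j (xb + t *\<^sub>R w') \<le> 0)"
    proof (rule feas[where Cp = Cp and Cm = Cm and Pg = Pg and vv = vv and ww = ww and Jx = Jx])
      show "Jx \<subseteq> {1..l}" by (rule JxS)
      show "\<And>i. i \<in> {1..m} \<Longrightarrow> \<exists>S. open S \<and> xb \<in> S \<and> continuous_on S (f i)" using h2 by blast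
      show "\<And>i. i \<in> {1..m} \<Longrightarrow> unif_dir_diff (f i) xb" by (rule udf)
      show "\<And>i. i \<in> {1..m} \<Longrightarrow> f i xb = 0" using fxb by blast
      show "\<And>i. i \<in> {1..m} \<Longrightarrow> Cp i \<noteq> {} \<and> Cm i \<noteq> {} \<and> bddE (Cp i) \<and> bddE (Cm i)" by (rule CpCm)
      show "\<And>i d. i \<in> {1..m} \<Longrightarrow> dir_deriv (f i) xb d \<le> supp (Cp i) d"
        unfolding Cp_def using hx by (blast intro: qd_up[OF qdf])
      show "\<And>i d. i \<in> {1..m} \<Longrightarrow> - supp (Cm i) d \<le> dir_deriv (f i) xb d"
        unfolding Cm_def using hx by (blast intro: qd_lo[OF qdf])
      show "\<And>i. i \<in> {1..m} \<Longrightarrow> supp (Cp i) (vv i) < 0 \<and> (\<forall>k\<in>{1..m} - {i}. supp (Cp k) (vv i) \<le> 0 \<and> supp (Cm k) (vv i) \<le> 0)"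
        by (rule vv)
      show "\<And>i. i \<in> {1..m} \<Longrightarrow> supp (Cm i) (ww i) < 0 \<and> (\<forall>k\<in>{1..m} - {i}. supp (Cm k) (ww i) \<le> 0 \<and> supp (Cp k) (ww i) \<le> 0)"
        by (rule ww)
      show "\<And>i. i \<in> {1..m} \<Longrightarrow> supp (Cp i) w \<le> 0 \<and> supp (Cm i) w \<le> 0" using wC by blast
      show "\<And>j. j \<in> Jx \<Longrightarrow> unif_dir_diff (g j) xb" by (rule udg)
      show "\<And>j. j \<in> Jx \<Longrightarrow> g j xb = 0" by (simp add: Jx_def)
      show "\<And>j. j \<in> Jx \<Longrightarrow> Pg j \<noteq> {} \<and> bddE (Pg j)" using Pgp JxS by blast
      show "\<And>j d. j \<in> Jx \<Longrightarrow> dir_deriv (g j) xb d \<le> supp (Pg j) d"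
        unfolding Pg_def using hz JxS by (blast intro: qd_up[OF qdg])
      show "\<And>j. j \<in> Jx \<Longrightarrow> supp (Pg j) w < 0" using wP by blast
      show "\<And>j. j \<in> {1..l} - Jx \<Longrightarrow> usc_at (g j) xb \<and> g j xb < 0"
        using h3a gxb by (force simp: Jx_def)
      show "\<eta> > 0" by (rule \<eta>p)
    qed
    then obtain t w' where tw: "0 < t" "t < \<eta>" "norm (w' - w) < \<eta>" "\<forall>i\<in>{1..m}. f i (xb + t *\<^sub>R w') = 0"
      "\<forall>j\<in>{1..l}. g j (xb + t *\<^sub>R w') \<le> 0" by blast
    have "dist (t, w') (0, w) \<le> \<bar>t\<bar> + \<bar>dist w' w\<bar>"
      unfolding dist_Pair_Pair using sqrt_sum_squares_le_sum_abs[of t "dist w' w"] by (simp add: dist_real_def)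
    also have "\<dots> < 2 * \<eta>" using tw by (simp add: dist_norm)
    also have "\<dots> \<le> \<delta>" by (simp add: \<eta>_def)
    finally have "\<bar>G (t, w') - Lh\<bar> < - Lh / 2" using \<delta>(2) tw(1) by blast
    then have "G (t, w') < 0" using Lhn by linarith
    then have less: "f0 (xb + t *\<^sub>R w') < f0 xb" using tw(1) by (simp add: G_def divide_less_0_iff)
    have "norm w' \<le> norm w + norm (w' - w)" by (metis add.commute diff_add_cancel norm_triangle_ineq)
    then have nw: "norm w' < norm w + 1" using tw(3) by (simp add: \<eta>_def)
    have "dist (xb + t *\<^sub>R w') xb = t * norm w'" using tw(1) by (simp add: dist_norm)
    also have "\<dots> \<le> t * (norm w + 2)" using tw(1) nw by (intro mult_left_mono) auto
    also have "\<dots> < \<eta> * (norm w + 2)" using tw(2) by (intro mult_strict_right_mono) (auto simp: add_nonneg_pos)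
    also have "\<dots> \<le> (r / (norm w + 2)) * (norm w + 2)" by (intro mult_right_mono) (auto simp: \<eta>_def)
    also have "\<dots> = r"
    proof -
      have "norm w + 2 \<noteq> 0" using norm_ge_zero[of w] by linarith
      then show ?thesis by simp
    qed
    finally have "dist (xb + t *\<^sub>R w') xb < r" .
    then have "f0 xb \<le> f0 (xb + t *\<^sub>R w')" using r(2) tw(4,5) by blast
    then show False using less by linarith
  qed

  have K0: "0 \<in> K" unfolding K_def by (rule cone_fam_zero)
  have Kadd: "a + b \<in> K" if "a \<in> K" "b \<in> K" for a b using that unfolding K_def by (rule cone_fam_add)
  have Kscale: "c *\<^sub>R a \<in> K" if "c \<ge> 0" "a \<in> K" for c a using that unfolding K_def by (rule cone_fam_scale)
  have CK: "Cp i \<subseteq> K \<and> Cm i \<subseteq> K" if i: "i \<in> {1..m}" for i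
  proof -
    have mem: "Cp i \<union> Cm i \<in> (\<lambda>i. ((\<lambda>a. a + ys i) ` Lf i) \<union> ((\<lambda>b. - xs i - b) ` Uf i)) ` {1..m}"
      using i by (auto simp: Cp_def Cm_def)
    have "u \<in> K" if "u \<in> Cp i \<union> Cm i" for u unfolding K_def by (rule cone_fam_base[OF that mem])
    then show ?thesis by blast
  qed
  have A0: "0 \<in> A" using K0 ws_subset_closure unfolding A_def by blast
  have KA: "K \<subseteq> A" unfolding A_def by (rule ws_subset_closure)
  have Aadd: "a + b \<in> A" if "a \<in> A" "b \<in> A" for a b
    using ws_closure_add[of K a b] Kadd that unfolding A_def by blast
  have Ascale: "c *\<^sub>R a \<in> A" if "c \<ge> 0" "a \<in> A" for c a
    using ws_closure_scale[of K a c] K0 Kscale that unfolding A_def by blast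
  obtain v0 where v0P: "\<forall>j\<in>Jx. supp (Pg j) v0 < 0" and v0C: "\<forall>i\<in>{1..m}. supp (Cp i) v0 \<le> 0 \<and> supp (Cm i) v0 \<le> 0"
    using c3 unfolding Cp_def Cm_def Pg_def by blast
  have Av0: "blinfun_apply a v0 \<le> 0" if "a \<in> A" for a
  proof -
    have "blinfun_apply k v0 \<le> 0" if k: "k \<in> K" for k
    proof -
      obtain F c where F: "finite F" "F \<subseteq> \<Union>((\<lambda>i. Cp i \<union> Cm i) ` {1..m})" "\<forall>u\<in>F. c u \<ge> 0" "k = (\<Sum>u\<in>F. c u *\<^sub>R u)"
        using k unfolding K_def cone_fam_def Cp_def Cm_def by blast
      have "blinfun_apply u v0 \<le> 0" if u: "u \<in> F" for u
      proof -
        obtain i where i: "i \<in> {1..m}" "u \<in> Cp i \<union> Cm i" using F(2) u by blast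
        from i(2) show ?thesis
        proof
          assume "u \<in> Cp i" then show ?thesis using supp_upper[of "Cp i" u v0] CpCm[OF i(1)] v0C i(1) by force
        next
          assume "u \<in> Cm i" then show ?thesis using supp_upper[of "Cm i" u v0] CpCm[OF i(1)] v0C i(1) by force
        qed
      qed
      then have "(\<Sum>u\<in>F. c u * blinfun_apply u v0) \<le> 0"
        using F(3) by (intro sum_nonpos mult_nonneg_nonpos) auto
      then show ?thesis using F(4) by (simp add: blinfun.sum_left blinfun.scaleR_left)
    qed
    then show ?thesis using ws_closure_halfspace[of K v0 a] that unfolding A_def by blast
  qed
  define J' where "J' = insert 0 Jx"
  define PP where "PP j = (if j = 0 then P0 else Pg j)" for j
  have fJ': "finite J'" using fJ by (simp add: J'_def)
  have PPp: "convex (PP j) \<and> PP j \<noteq> {} \<and> compactin weak_star (PP j)" if "j \<in> J'" for j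
    using that P0p Pgp JxS by (auto simp: J'_def PP_def)
  define E where "E = {\<Sum>j\<in>J'. c j *\<^sub>R s j | c s. (\<forall>j\<in>J'. c j \<ge> 0) \<and> sum c J' = 1 \<and> (\<forall>j\<in>J'. s j \<in> PP j)}"
  have Ecomp: "compactin weak_star E" unfolding E_def by (rule hull_compact[OF fJ']) (use PPp in blast)
  have Econv: "convex E"
  proof -
    have "convex hull (\<Union>(PP ` J')) = E" unfolding E_def
      by (rule convex_hull_finite_union[OF fJ']) (use PPp in blast)
    then show ?thesis by (metis convex_convex_hull)
  qed
  have PPE: "p \<in> E" if j: "j \<in> J'" and p: "p \<in> PP j" for j p
  proof -
    define s where "s i = (if i = j then p else (SOME q. q \<in> PP i))" for i
    define c where "c i = (if i = j then 1 else (0::real))" for i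
    have "\<forall>i\<in>J'. s i \<in> PP i"
    proof
      fix i assume i: "i \<in> J'"
      have "PP i \<noteq> {}" using PPp[OF i] by blast
      then show "s i \<in> PP i" using p by (simp add: s_def some_in_eq)
    qed
    moreover have "sum c J' = 1" using fJ' j by (simp add: c_def)
    moreover have "(\<Sum>i\<in>J'. c i *\<^sub>R s i) = p"
    proof -
      have "(\<Sum>i\<in>J'. c i *\<^sub>R s i) = (\<Sum>i\<in>J'. if i = j then s i else 0)" by (rule sum.cong) (auto simp: c_def)
      also have "\<dots> = p" using fJ' j by (simp add: s_def)
      finally show ?thesis .
    qed
    ultimately show ?thesis unfolding E_def by (intro CollectI exI[of _ c] exI[of _ s]) (auto simp: c_def)
  qed
  have zero_in: "\<exists>e\<in>E. \<exists>a\<in>A. e + a = 0"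
  proof (rule ccontr)
    assume nz: "\<not> ?thesis"
    obtain V \<epsilon> where V: "finite V" "\<epsilon> > 0" "\<forall>e\<in>E. \<forall>a\<in>A. \<exists>v\<in>V. \<epsilon> \<le> \<bar>blinfun_apply (e + a) v\<bar>"
      using ws_cover[OF Ecomp, of K] nz unfolding A_def by blast
    define Q where "Q = {e + a | e a. e \<in> E \<and> a \<in> A}"
    define Y where "Y = (\<lambda>q v. blinfun_apply q v) ` Q"
    have "\<exists>c. \<forall>x\<in>Y. \<epsilon>^2 \<le> (\<Sum>v\<in>V. c v * x v)"
    proof (rule finsep[OF V(1,2)])
      fix y x and u :: real assume y: "y \<in> Y" and x: "x \<in> Y" and u: "0 \<le> u" "u \<le> 1"
      obtain e1 a1 where 1: "e1 \<in> E" "a1 \<in> A" "y = (\<lambda>v. blinfun_apply (e1 + a1) v)" using y unfolding Y_def Q_def by blast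
      obtain e2 a2 where 2: "e2 \<in> E" "a2 \<in> A" "x = (\<lambda>v. blinfun_apply (e2 + a2) v)" using x unfolding Y_def Q_def by blast
      have eE: "(1 - u) *\<^sub>R e1 + u *\<^sub>R e2 \<in> E" using Econv 1(1) 2(1) u unfolding convex_def by auto
      have aA: "(1 - u) *\<^sub>R a1 + u *\<^sub>R a2 \<in> A" using 1(2) 2(2) u by (intro Aadd Ascale) auto
      have "(\<lambda>v. (1 - u) * y v + u * x v) = (\<lambda>v. blinfun_apply (((1 - u) *\<^sub>R e1 + u *\<^sub>R e2) + ((1 - u) *\<^sub>R a1 + u *\<^sub>R a2)) v)"
        unfolding 1(3) 2(3) by (rule ext) (simp add: blinfun.add_left blinfun.scaleR_left blinfun.diff_left algebra_simps)
      then show "(\<lambda>v. (1 - u) * y v + u * x v) \<in> Y" using eE aA unfolding Y_def Q_def by blast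
    next
      fix y assume "y \<in> Y"
      then obtain e a where "e \<in> E" "a \<in> A" "y = (\<lambda>v. blinfun_apply (e + a) v)" unfolding Y_def Q_def by blast
      then show "\<exists>v\<in>V. \<epsilon> \<le> \<bar>y v\<bar>" using V(3) by auto
    qed
    then obtain c where c: "\<forall>x\<in>Y. \<epsilon>^2 \<le> (\<Sum>v\<in>V. c v * x v)" by blast
    define w0 where "w0 = (\<Sum>v\<in>V. c v *\<^sub>R v)"
    have qw: "\<epsilon>^2 \<le> blinfun_apply (e + a) w0" if "e \<in> E" "a \<in> A" for e a
    proof -
      have "(\<lambda>v. blinfun_apply (e + a) v) \<in> Y" using that unfolding Y_def Q_def by blast
      then have "\<epsilon>^2 \<le> (\<Sum>v\<in>V. c v * blinfun_apply (e + a) v)" using c by auto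
      also have "\<dots> = blinfun_apply (e + a) w0" by (simp add: w0_def blinfun.sum_right blinfun.scaleR_right)
      finally show ?thesis .
    qed
    have ew: "\<epsilon>^2 \<le> blinfun_apply e w0" if "e \<in> E" for e using qw[OF that A0] by simp
    obtain e0 where e0: "e0 \<in> E" using PPE[of 0] PPp[of 0] by (auto simp: J'_def)
    have aw: "0 \<le> blinfun_apply a w0" if a: "a \<in> A" for a
    proof (rule ccontr)
      assume "\<not> ?thesis"
      then have an: "blinfun_apply a w0 < 0" by simp
      define t where "t = (\<bar>blinfun_apply e0 w0\<bar> + 1) / (- blinfun_apply a w0)"
      have tp: "t \<ge> 0" unfolding t_def using an by (intro divide_nonneg_pos) auto
      have "t * blinfun_apply a w0 = - (\<bar>blinfun_apply e0 w0\<bar> + 1)" using an by (simp add: t_def)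
      moreover have "\<epsilon>^2 \<le> blinfun_apply (e0 + t *\<^sub>R a) w0" by (rule qw[OF e0 Ascale[OF tp a]])
      ultimately have "\<epsilon>^2 \<le> blinfun_apply e0 w0 - (\<bar>blinfun_apply e0 w0\<bar> + 1)"
        by (simp add: blinfun.add_left blinfun.scaleR_left)
      moreover have "0 \<le> \<epsilon>^2" by simp
      ultimately show False by linarith
    qed
    show False
    proof (rule lemA[of "- w0"])
      show "\<forall>i\<in>{1..m}. supp (Cp i) (- w0) \<le> 0 \<and> supp (Cm i) (- w0) \<le> 0"
      proof
        fix i assume i: "i \<in> {1..m}"
        have "blinfun_apply u (- w0) \<le> 0" if "u \<in> Cp i \<union> Cm i" for u
          using aw[of u] KA CK[OF i] that by (auto simp: blinfun.minus_right)
        then show "supp (Cp i) (- w0) \<le> 0 \<and> supp (Cm i) (- w0) \<le> 0"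
          using CpCm[OF i] by (auto intro!: supp_least)
      qed
      show "\<forall>j\<in>Jx. supp (Pg j) (- w0) < 0"
      proof
        fix j assume j: "j \<in> Jx"
        then have j': "j \<in> J'" "PP j = Pg j" using zJ by (auto simp: J'_def PP_def)
        have "blinfun_apply p (- w0) \<le> - (\<epsilon>^2)" if "p \<in> Pg j" for p
          using ew[OF PPE[OF j'(1)]] that j'(2) by (auto simp: blinfun.minus_right)
        then have "supp (Pg j) (- w0) \<le> - (\<epsilon>^2)" using Pgp JxS j by (auto intro!: supp_least)
        then show "supp (Pg j) (- w0) < 0" using V(2) by (smt (verit) zero_less_power)
      qed
      have "blinfun_apply p (- w0) \<le> - (\<epsilon>^2)" if "p \<in> P0" for p
        using ew[OF PPE[of 0 p]] that by (auto simp: blinfun.minus_right J'_def PP_def)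
      then have "supp P0 (- w0) \<le> - (\<epsilon>^2)" using P0p by (auto intro!: supp_least)
      then show "supp P0 (- w0) < 0" using V(2) by (smt (verit) zero_less_power)
    qed
  qed
  then obtain e a where eE: "e \<in> E" and aA: "a \<in> A" and ea: "e + a = 0" by blast
  then obtain \<mu> p where \<mu>p: "e = (\<Sum>j\<in>J'. \<mu> j *\<^sub>R p j)" "\<forall>j\<in>J'. \<mu> j \<ge> 0" "sum \<mu> J' = 1" "\<forall>j\<in>J'. p j \<in> PP j"
    unfolding E_def by blast
  have sumJ': "sum \<mu> J' = \<mu> 0 + sum \<mu> Jx" unfolding J'_def using fJ zJ by simp
  have eJ': "e = \<mu> 0 *\<^sub>R p 0 + (\<Sum>j\<in>Jx. \<mu> j *\<^sub>R p j)" unfolding \<mu>p(1) J'_def using fJ zJ by simp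
  have pJ: "p j \<in> Pg j" if jJ: "j \<in> Jx" for j
  proof -
    have "j \<noteq> 0" using jJ zJ by (metis)
    moreover have "p j \<in> PP j" using \<mu>p(4) jJ by (auto simp: J'_def)
    ultimately show ?thesis by (simp add: PP_def)
  qed
  have p0: "p 0 \<in> P0" using \<mu>p(4) by (auto simp: J'_def PP_def)
  have \<mu>0: "\<mu> 0 > 0"
  proof (rule ccontr)
    assume "\<not> ?thesis"
    then have z: "\<mu> 0 = 0" using \<mu>p(2) by (force simp: J'_def)
    then have s1: "sum \<mu> Jx = 1" using sumJ' \<mu>p(3) by simp
    have "\<exists>j\<in>Jx. \<mu> j > 0"
    proof (rule ccontr)
      assume "\<not> ?thesis"
      then have "\<forall>j\<in>Jx. \<mu> j \<le> 0" by auto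
      then have "sum \<mu> Jx \<le> 0" by (intro sum_nonpos) blast
      then show False using s1 by simp
    qed
    then obtain j where j: "j \<in> Jx" "\<mu> j > 0" by blast
    have pv: "blinfun_apply (p i) v0 < 0" if "i \<in> Jx" for i
      using supp_upper[of "Pg i" "p i" v0] Pgp[of i] JxS that pJ[OF that] v0P by force
    have "(\<Sum>i\<in>Jx. \<mu> i * blinfun_apply (p i) v0) < 0"
    proof (rule sum_neg_witness[OF fJ j(1)])
      show "\<mu> j * blinfun_apply (p j) v0 < 0" using j pv[OF j(1)] by (simp add: mult_pos_neg)
      fix i assume i: "i \<in> Jx"
      then have "\<mu> i \<ge> 0" using \<mu>p(2) by (auto simp: J'_def)
      then show "\<mu> i * blinfun_apply (p i) v0 \<le> 0" using pv[OF i] by (simp add: mult_nonneg_nonpos)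
    qed
    then have "blinfun_apply e v0 < 0" using eJ' z by (simp add: blinfun.add_left blinfun.sum_left blinfun.scaleR_left)
    moreover have "blinfun_apply a v0 \<le> 0" by (rule Av0[OF aA])
    moreover have "blinfun_apply (e + a) v0 = 0" using ea by simp
    ultimately show False by (simp add: blinfun.add_left)
  qed
  define lam where "lam j = (if j \<in> Jx then \<mu> j / \<mu> 0 else 0)" for j
  define b where "b j = (if j \<in> Jx then p j - z j else (SOME q. q \<in> Lg j))" for j
  define a0 where "a0 = p 0 - y0"
  define c where "c = (1 / \<mu> 0) *\<^sub>R a"
  have lam_ok: "\<forall>j\<in>{1..l}. lam j \<ge> 0 \<and> lam j * g j xb = 0"
    using \<mu>p(2) \<mu>0 by (auto simp: lam_def J'_def Jx_def)
  have b_ok: "\<forall>j\<in>{1..l}. b j \<in> Lg j"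
  proof
    fix j assume j: "j \<in> {1..l}"
    show "b j \<in> Lg j"
    proof (cases "j \<in> Jx")
      case True
      then obtain q where "q \<in> Lg j" "p j = q + z j" using pJ[OF True] unfolding Pg_def by blast
      then show ?thesis using True by (simp add: b_def)
    next
      case False
      have "Lg j \<noteq> {}" using qd_props(1)[OF qdg[OF j]] .
      then show ?thesis using False by (simp add: b_def some_in_eq)
    qed
  qed
  have a0_ok: "a0 \<in> L0" using p0 unfolding P0_def a0_def by auto
  have c_ok: "c \<in> A" using Ascale[OF _ aA, of "1 / \<mu> 0"] \<mu>0 unfolding c_def by simp
  have S: "(\<Sum>j\<in>{1..l}. lam j *\<^sub>R (b j + z j)) = (\<Sum>j\<in>Jx. (\<mu> j / \<mu> 0) *\<^sub>R p j)"
  proof -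
    have "(\<Sum>j\<in>{1..l}. lam j *\<^sub>R (b j + z j)) = (\<Sum>j\<in>Jx. lam j *\<^sub>R (b j + z j))"
      by (rule sum.mono_neutral_right) (use JxS in \<open>auto simp: lam_def\<close>)
    also have "\<dots> = (\<Sum>j\<in>Jx. (\<mu> j / \<mu> 0) *\<^sub>R p j)" by (rule sum.cong) (auto simp: lam_def b_def)
    finally show ?thesis .
  qed
  have "0 = (1 / \<mu> 0) *\<^sub>R (e + a)" using ea by simp
  also have "\<dots> = p 0 + (\<Sum>j\<in>Jx. (\<mu> j / \<mu> 0) *\<^sub>R p j) + c"
    using \<mu>0 unfolding eJ' c_def by (simp add: scaleR_add_right scaleR_sum_right)
  also have "\<dots> = a0 + y0 + (\<Sum>j\<in>{1..l}. lam j *\<^sub>R (b j + z j)) + c" unfolding S a0_def by simp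
  finally have eq: "0 = a0 + y0 + (\<Sum>j\<in>{1..l}. lam j *\<^sub>R (b j + z j)) + c" .
  show ?thesis using lam_ok b_ok a0_ok c_ok[unfolded A_def K_def] eq by blast
qed

end
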